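(* Let $T$ be a lifted graph, $F\colon T\to T$ a continuous sun-like map of degree 1, ${\cal P}$ a basic partition of $F$ and ${\cal G}$ its covering graph. (i) Every connected component of ${\cal G}$ contains a vertex of the basis, and the number of connected components of ${\cal G}$ is finite and at most $\#{\cal P}$. (ii) Let ${\cal I}$ be the set of infinite paths $(\alpha_n)_{n\ge0}$ in ${\cal G}$ with $H(\alpha_0)=0$ and $H(\alpha_n)>0$ for all $n\ge1$. If $(\alpha_n)_{n\ge0}\in{\cal I}$ then $H(\alpha_n)=n$ for all $n\ge0$; moreover ${\cal I}$ is finite and $\#{\cal I}\le\#{\cal P}$. (iii) If $(\alpha_n)_{n\ge0}$ is an infinite path in ${\cal G}$, then either there exists a connected component $C$ of ${\cal G}$ such that $\alpha_n\in C$ for all sufficiently large $n$, or there exist $(\beta_n)_{n\ge0}\in{\cal I}$ and $N,M\ge0$ such that $\alpha_{N+n}=\beta_{M+n}$ for all $n\ge0$.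
   Context: A lifted graph is a connected topological space $T$ with a homeomorphism $h\colon\mathbb R\to h(\mathbb R)\subset T$ and a homeomorphism $\tau\colon T\to T$ such that $\tau(h(x))=h(x+1)$, the closure of each connected component of $T\setminus h(\mathbb R)$ is a topological finite graph meeting $h(\mathbb R)$ in exactly one point, and only finitely many such components have closure meeting $h([0,1])$. Identify $h(\mathbb R)$ with $\mathbb R$, write $x+m:=\tau^m(x)$; $r_{\mathbb R}\colon T\to\mathbb R$ is the identity on $\mathbb R$ and maps a component $C'$ of $T\setminus\mathbb R$ to the point $\overline{C'}\cap\mathbb R$. $F$ has degree 1 if $F(x+1)=F(x)+1$. Let $T_{\mathbb R}:=\overline{\bigcup_{n\ge0}F^n(\mathbb R)}$, $X:=\overline{T\setminus T_{\mathbb R}}\cap r_{\mathbb R}^{-1}([0,1))$. $F$ is sun-like if $(T\setminus T_{\mathbb R})\cap r_{\mathbb R}^{-1}([0,1))$ consists of finitely many intervals with pairwise disjoint closures $X^i$, $i\in\Lambda$ (branches), each a compact interval meeting $T_{\mathbb R}$ in one endpoint $\min X^i$ (fixing the order of $X^i$). A basic partition is a finite family ${\cal P}=\{X^i_j\}$ of pairwise disjoint nonempty compact intervals $X^i_1<\dots<X^i_{N_i}$ in $X^i$, with $\ell(X^i_j)\in\Lambda$, $p(X^i_j)\in\mathbb Z$, such that $F(X^i_j)\subset(X^{\ell(X^i_j)}+p(X^i_j))\cup\mathrm{Int}(T_{\mathbb R})$, $F(\min X^i_j)=\min X^{\ell(X^i_j)}+p(X^i_j)$, and $F(X\setminus\bigcup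 X^i_j)\cap(X+\mathbb Z)=\emptyset$. For $A_0,\dots,A_n\in{\cal P}$, $\langle A_0\dots A_n\rangle:=F^n(\{x\in T: F^i(x)\in A_i+\mathbb Z,\ 0\le i\le n\})\cap X$. $A_0\dots A_n\sim B_0\dots B_m$ iff for some $k\le\min(n,m)$, $A_{n-i}=B_{m-i}$ ($0\le i\le k$) and $\langle A_0\dots A_{n-k}\rangle=A_{n-k}=B_{m-k}=\langle B_0\dots B_{m-k}\rangle$. The covering graph ${\cal G}$: vertices are classes $A_0\dots A_n/\!\sim$ with $\langle A_0\dots A_n\rangle\ne\emptyset$; arrow $\alpha\to\beta$ iff $\alpha=A_0\dots A_n/\!\sim$, $\beta=A_0\dots A_nA_{n+1}/\!\sim$ for some $A_i\in{\cal P}$. The significant part of $A_0\dots A_n$ is $A_i\dots A_n$ with $i$ the largest index such that $A_0\dots A_n\sim A_i\dots A_n$ (it depends only on the class); the height $H(\alpha)$ of a vertex $\alpha$ is $n-i$, i.e. the length minus one of its significant part. The basis is the set of vertices of height $0$, i.e. $\{A/\!\sim: A\in{\cal P}\}$, identified with ${\cal P}$. An infinite path is a sequence $(\alpha_n)$ of vertices with $\alpha_n\to\alpha_{n+1}$ for all $n$. A subgraph is strongly connected if any two of its vertices $u,v$ are joined by an oriented path of positive length from $u$ to $v$ within it; connected components are the maximal strongly connected subgraphs. *)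

theory Defs
  imports "HOL-Analysis.Analysis"
begin

text \<open>A (topological) finite graph inside a topological space: a finite union of
finitely many vertices and finitely many arcs (homeomorphic images of [0,1]) whose
endpoints are vertices, whose interiors avoid the vertices, and such that distinct
arcs meet only at vertices.  (Loops and multiple edges are handled by subdivision.)\<close>
definition fin_graph :: "'a::topological_space set \<Rightarrow> bool" where
  "fin_graph G \<longleftrightarrow>
     (\<exists>V E. finite V \<and> finite E \<and> G = V \<union> \<Union>E \<and>
        (\<forall>A\<in>E. \<exists>g g'. homeomorphism {0..1::real} A g g' \<and> g 0 \<in> V \<and> g 1 \<in> V \<and>
                        g ` {0<..<1} \<inter> V = {}) \<and>
        (\<forall>A\<in>E. \<forall>B\<in>E. A \<noteq> B \<longrightarrow> A \<inter> B \<subseteq> V))"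

text \<open>The whole type is the space T; h embeds the real line, tau is the translation.\<close>
definition lifted_graph :: "(real \<Rightarrow> 'a::topological_space) \<Rightarrow> ('a \<Rightarrow> 'a) \<Rightarrow> bool" where
  "lifted_graph h \<tau> \<longleftrightarrow>
     connected (UNIV :: 'a set) \<and>
     (\<exists>h'. homeomorphism (UNIV :: real set) (range h) h h') \<and>
     (\<exists>\<tau>'. homeomorphism (UNIV :: 'a set) UNIV \<tau> \<tau>') \<and>
     (\<forall>x. \<tau> (h x) = h (x + 1)) \<and>
     (\<forall>C \<in> components (- range h). fin_graph (closure C) \<and>
                                     (\<exists>!y. y \<in> closure C \<inter> range h)) \<and>
     finite {C \<in> components (- range h). closure C \<inter> h ` {0..1} \<noteq> {}}"

text \<open>Integer translations  x + m := tau^m (x).\<close>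
definition tr :: "('a \<Rightarrow> 'a) \<Rightarrow> int \<Rightarrow> 'a \<Rightarrow> 'a" where
  "tr \<tau> m = (if m \<ge> 0 then \<tau> ^^ nat m else (inv \<tau>) ^^ nat (- m))"

definition plusZ :: "('a \<Rightarrow> 'a) \<Rightarrow> 'a set \<Rightarrow> 'a set" where
  "plusZ \<tau> A = (\<Union>m::int. tr \<tau> m ` A)"

definition retr :: "(real \<Rightarrow> 'a::topological_space) \<Rightarrow> 'a \<Rightarrow> 'a" where
  "retr h x = (if x \<in> range h then x
               else (THE y. y \<in> closure (connected_component_set (- range h) x) \<inter> range h))"

definition degree_one :: "('a \<Rightarrow> 'a) \<Rightarrow> ('a \<Rightarrow> 'a) \<Rightarrow> bool" where
  "degree_one \<tau> F \<longleftrightarrow> (\<forall>x. F (\<tau> x) = \<tau> (F x))"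

definition TR :: "(real \<Rightarrow> 'a::topological_space) \<Rightarrow> ('a \<Rightarrow> 'a) \<Rightarrow> 'a set" where
  "TR h F = closure (\<Union>n. (F ^^ n) ` range h)"

definition Xset :: "(real \<Rightarrow> 'a::topological_space) \<Rightarrow> ('a \<Rightarrow> 'a) \<Rightarrow> 'a set" where
  "Xset h F = closure (- TR h F) \<inter> {x. retr h x \<in> h ` {0..<1}}"

text \<open>A parametrisation of a branch B: a homeomorphism from [0,1] onto B whose
starting point is the unique point of B in T_R (this fixes the order of B).\<close>
definition branch_param :: "'a::topological_space set \<Rightarrow> 'a set \<Rightarrow> (real \<Rightarrow> 'a) \<Rightarrow> bool" where
  "branch_param TRs B g \<longleftrightarrow> (\<exists>g'. homeomorphism {0..1::real} B g g') \<and> B \<inter> TRs = {g 0}"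

definition branches :: "(real \<Rightarrow> 'a::topological_space) \<Rightarrow> ('a \<Rightarrow> 'a) \<Rightarrow> 'a set set" where
  "branches h F = closure ` components (- TR h F \<inter> {x. retr h x \<in> h ` {0..<1}})"

definition sun_like :: "(real \<Rightarrow> 'a::topological_space) \<Rightarrow> ('a \<Rightarrow> 'a) \<Rightarrow> bool" where
  "sun_like h F \<longleftrightarrow>
     (let S = - TR h F \<inter> {x. retr h x \<in> h ` {0..<1}} in
       finite (components S) \<and>
       (\<forall>C\<in>components S. \<forall>D\<in>components S. C \<noteq> D \<longrightarrow> closure C \<inter> closure D = {}) \<and>
       (\<forall>C\<in>components S. \<exists>g. branch_param (TR h F) (closure C) g))"

definition basic_partition ::
  "(real \<Rightarrow> 'a::topological_space) \<Rightarrow> ('a \<Rightarrow> 'a) \<Rightarrow> ('a \<Rightarrow> 'a) \<Rightarrow> 'a set set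
    \<Rightarrow> ('a set \<Rightarrow> 'a set) \<Rightarrow> ('a set \<Rightarrow> int) \<Rightarrow> bool" where
  "basic_partition h \<tau> F P lb p \<longleftrightarrow>
     finite P \<and>
     (\<forall>A\<in>P. \<forall>B\<in>P. A \<noteq> B \<longrightarrow> A \<inter> B = {}) \<and>
     (\<forall>A\<in>P. lb A \<in> branches h F \<and>
        (\<exists>B\<in>branches h F. \<exists>g a b. branch_param (TR h F) B g \<and> 0 \<le> a \<and> a \<le> b \<and> b \<le> 1 \<and>
             A = g ` {a..b} \<and>
             F (g a) = tr \<tau> (p A) (THE z. z \<in> lb A \<inter> TR h F)) \<and>
        F ` A \<subseteq> tr \<tau> (p A) ` (lb A) \<union> interior (TR h F)) \<and>
     F ` (Xset h F - \<Union>P) \<inter> plusZ \<tau> (Xset h F) = {}"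

definition words :: "'a set set \<Rightarrow> 'a set list set" where
  "words P = {w. w \<noteq> [] \<and> set w \<subseteq> P}"

definition cyl :: "(real \<Rightarrow> 'a::topological_space) \<Rightarrow> ('a \<Rightarrow> 'a) \<Rightarrow> ('a \<Rightarrow> 'a) \<Rightarrow> 'a set list \<Rightarrow> 'a set" where
  "cyl h \<tau> F w =
     (F ^^ (length w - 1)) ` {x. \<forall>i<length w. (F ^^ i) x \<in> plusZ \<tau> (w ! i)} \<inter> Xset h F"

definition weq :: "(real \<Rightarrow> 'a::topological_space) \<Rightarrow> ('a \<Rightarrow> 'a) \<Rightarrow> ('a \<Rightarrow> 'a) \<Rightarrow> 'a set list \<Rightarrow> 'a set list \<Rightarrow> bool" where
  "weq h \<tau> F w v \<longleftrightarrow>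
     (let n = length w - 1; m = length v - 1 in
      \<exists>k \<le> min n m. (\<forall>i\<le>k. w ! (n - i) = v ! (m - i)) \<and>
        cyl h \<tau> F (take (n - k + 1) w) = w ! (n - k) \<and>
        w ! (n - k) = v ! (m - k) \<and>
        v ! (m - k) = cyl h \<tau> F (take (m - k + 1) v))"

definition cls :: "(real \<Rightarrow> 'a::topological_space) \<Rightarrow> ('a \<Rightarrow> 'a) \<Rightarrow> ('a \<Rightarrow> 'a) \<Rightarrow> 'a set set \<Rightarrow> 'a set list \<Rightarrow> 'a set list set" where
  "cls h \<tau> F P w = {v \<in> words P. weq h \<tau> F w v}"

definition cg_vertices :: "(real \<Rightarrow> 'a::topological_space) \<Rightarrow> ('a \<Rightarrow> 'a) \<Rightarrow> ('a \<Rightarrow> 'a) \<Rightarrow> 'a set set \<Rightarrow> 'a set list set set" where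
  "cg_vertices h \<tau> F P = {cls h \<tau> F P w | w. w \<in> words P \<and> cyl h \<tau> F w \<noteq> {}}"

definition cg_arrows :: "(real \<Rightarrow> 'a::topological_space) \<Rightarrow> ('a \<Rightarrow> 'a) \<Rightarrow> ('a \<Rightarrow> 'a) \<Rightarrow> 'a set set \<Rightarrow> ('a set list set \<times> 'a set list set) set" where
  "cg_arrows h \<tau> F P =
     {(\<alpha>, \<beta>). \<alpha> \<in> cg_vertices h \<tau> F P \<and> \<beta> \<in> cg_vertices h \<tau> F P \<and>
        (\<exists>w A. w \<in> words P \<and> A \<in> P \<and> \<alpha> = cls h \<tau> F P w \<and> \<beta> = cls h \<tau> F P (w @ [A]))}"

text \<open>Height: length minus one of the significant part A_i ... A_n, where i is the
largest index with A_0...A_n ~ A_i...A_n (independent of the representative).\<close>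
definition height :: "(real \<Rightarrow> 'a::topological_space) \<Rightarrow> ('a \<Rightarrow> 'a) \<Rightarrow> ('a \<Rightarrow> 'a) \<Rightarrow> 'a set list set \<Rightarrow> nat" where
  "height h \<tau> F \<alpha> =
     (let w = (SOME w. w \<in> \<alpha>) in
        length w - 1 - (GREATEST i. i < length w \<and> weq h \<tau> F w (drop i w)))"

definition inf_path :: "'v set \<Rightarrow> ('v \<times> 'v) set \<Rightarrow> (nat \<Rightarrow> 'v) \<Rightarrow> bool" where
  "inf_path V E a \<longleftrightarrow> (\<forall>n. a n \<in> V \<and> (a n, a (Suc n)) \<in> E)"

definition strongly_connected :: "'v set \<Rightarrow> ('v \<times> 'v) set \<Rightarrow> 'v set \<Rightarrow> bool" where
  "strongly_connected V E S \<longleftrightarrow> S \<noteq> {} \<and> S \<subseteq> V \<and>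
     (\<forall>u\<in>S. \<forall>v\<in>S. (u, v) \<in> (E \<inter> S \<times> S)\<^sup>+)"

definition conn_component :: "'v set \<Rightarrow> ('v \<times> 'v) set \<Rightarrow> 'v set \<Rightarrow> bool" where
  "conn_component V E C \<longleftrightarrow> strongly_connected V E C \<and>
     (\<forall>S. strongly_connected V E S \<and> C \<subseteq> S \<longrightarrow> S = C)"

end

theory Submission
  imports Defs
begin


lemma homeo_closure:
  assumes cf: "continuous_on UNIV f" and cg: "continuous_on UNIV g"
    and gf: "\<And>x. g (f x) = x" and fg: "\<And>y. f (g y) = y"
  shows "f ` closure Y = closure (f ` Y)"
proof
  show "f ` closure Y \<subseteq> closure (f ` Y)"
    by (rule image_closure_subset[OF continuous_on_subset[OF cf subset_UNIV] closed_closure closure_subset])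
next
  have "g ` closure (f ` Y) \<subseteq> closure (g ` f ` Y)"
    by (rule image_closure_subset[OF continuous_on_subset[OF cg subset_UNIV] closed_closure closure_subset])
  also have "g ` f ` Y = Y" using gf by (auto simp: image_iff)
  finally have "g ` closure (f ` Y) \<subseteq> closure Y" .
  then show "closure (f ` Y) \<subseteq> f ` closure Y"
    using fg by (metis image_subset_iff rev_image_eqI subsetI)
qed

lemma DC:
  fixes T0 :: "'a::topological_space set"
  assumes cT: "closed T0" and hom: "homeomorphism {0..1::real} L g g'" and LT: "L \<inter> T0 = {g 0}"
    and cQ: "connected Q" and QL: "Q \<subseteq> L \<union> interior T0" and g0: "g 0 \<in> Q"
    and s: "0 \<le> s'" "s' \<le> s" "s \<le> 1" and gs: "g s \<in> Q"
  shows "g s' \<in> Q"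
proof (rule ccontr)
  assume ns: "g s' \<notin> Q"
  have hd: "\<And>u. u \<in> {0..1} \<Longrightarrow> g' (g u) = u" "g ` {0..1} = L" "continuous_on {0..1} g"
    "\<And>y. y \<in> L \<Longrightarrow> g (g' y) = y" "g' ` L = {0..1}" "continuous_on L g'"
    using hom unfolding homeomorphism_def by auto
  have s'0: "s' > 0" using ns g0 s by (cases "s' = 0") auto
  have ss: "s' < s" using ns gs s by (cases "s' = s") auto
  have pre: "g ` {c..d} = L \<inter> g' -` {c..d}" if "0 \<le> c" "d \<le> 1" for c d
  proof
    show "g ` {c..d} \<subseteq> L \<inter> g' -` {c..d}"
      using hd that by auto
    show "L \<inter> g' -` {c..d} \<subseteq> g ` {c..d}"
    proof
      fix y assume y: "y \<in> L \<inter> g' -` {c..d}"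
      then have "y = g (g' y)" using hd by auto
      then show "y \<in> g ` {c..d}" using y by auto
    qed
  qed
  have "closedin (top_of_set L) (g ` {s'..1})"
    unfolding pre[OF s(1) order_refl] by (rule continuous_closedin_preimage[OF hd(6)]) simp
  then obtain T1 where T1: "closed T1" "g ` {s'..1} = L \<inter> T1" by (auto simp: closedin_closed)
  have s'1: "s' \<le> 1" using s by simp
  have "closedin (top_of_set L) (g ` {0..s'})"
    unfolding pre[OF order_refl s'1] by (rule continuous_closedin_preimage[OF hd(6)]) simp
  then obtain T2 where T2: "closed T2" "g ` {0..s'} = L \<inter> T2" by (auto simp: closedin_closed)
  define E1 where "E1 = Q \<inter> (T1 - interior T0)"
  define E2 where "E2 = Q \<inter> (T2 \<union> T0)"
  have c1: "closedin (top_of_set Q) E1" unfolding E1_def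
    by (rule closedin_closed_Int) (use T1 in auto)
  have c2: "closedin (top_of_set Q) E2" unfolding E2_def
    by (rule closedin_closed_Int) (use T2 cT in auto)
  have cov: "Q \<subseteq> E1 \<union> E2"
  proof
    fix q assume q: "q \<in> Q"
    show "q \<in> E1 \<union> E2"
    proof (cases "q \<in> interior T0")
      case True then show ?thesis using q interior_subset unfolding E2_def by blast
    next
      case False
      then have "q \<in> L" using q QL by auto
      then obtain u where u: "u \<in> {0..1}" "q = g u" using hd by auto
      show ?thesis
      proof (cases "s' \<le> u")
        case True
        then have "q \<in> T1" using T1 u by auto
        then show ?thesis using q False unfolding E1_def by auto
      next
        case False
        then have "q \<in> T2" using T2 u by auto
        then show ?thesis using q unfolding E2_def by auto
      qed
    qed
  qed
  have dis: "E1 \<inter> E2 = {}"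
  proof (rule ccontr)
    assume "E1 \<inter> E2 \<noteq> {}"
    then obtain q where q: "q \<in> Q" "q \<in> T1" "q \<notin> interior T0" "q \<in> T2 \<or> q \<in> T0"
      unfolding E1_def E2_def by auto
    then have qL: "q \<in> L" using QL by auto
    then have "q \<in> g ` {s'..1}" using T1 q by auto
    then obtain u where u: "u \<in> {s'..1}" "q = g u" by auto
    have u01: "u \<in> {0..1}" using u s by auto
    show False
      using q(4)
    proof
      assume "q \<in> T2"
      then have "q \<in> g ` {0..s'}" using T2 qL by auto
      then obtain u' where u': "u' \<in> {0..s'}" "q = g u'" by auto
      have "u' \<in> {0..1}" using u' s by auto
      then have "u = u'" using hd(1) u u' u01 by metis
      then have "u = s'" using u u' by auto
      then show False using ns q u by simp
    next
      assume "q \<in> T0"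
      then have "q = g 0" using LT qL by auto
      then have "u = 0" using hd(1) u01 u by (metis atLeastAtMost_iff order_refl zero_le_one)
      then show False using u s'0 by simp
    qed
  qed
  have ne1: "E1 \<noteq> {}"
  proof -
    have "g s \<in> T1" using T1 ss s by auto
    moreover have "g s \<notin> T0"
    proof
      assume "g s \<in> T0"
      have s01: "s \<in> {0..1}" using s by simp
      then have "g s \<in> L" using hd(2) by blast
      then have "g s = g 0" using LT \<open>g s \<in> T0\<close> by blast
      then have "g' (g s) = g' (g 0)" by simp
      then have "s = 0" using hd(1)[OF s01] hd(1)[of 0] by simp
      then show False using ss s'0 by simp
    qed
    ultimately show ?thesis using gs interior_subset unfolding E1_def by blast
  qed
  have ne2: "E2 \<noteq> {}" using g0 LT unfolding E2_def by auto
  show False using cQ c1 c2 cov dis ne1 ne2 unfolding connected_closedin by blast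
qed


locale sett =
  fixes h :: "real \<Rightarrow> 'a::topological_space" and \<tau> F :: "'a \<Rightarrow> 'a"
    and P :: "'a set set" and lb :: "'a set \<Rightarrow> 'a set" and p :: "'a set \<Rightarrow> int"
  assumes LG: "lifted_graph h \<tau>" and cont: "continuous_on UNIV F" and SL: "sun_like h F"
    and deg: "degree_one \<tau> F" and BP: "basic_partition h \<tau> F P lb p"
begin

lemma tau_props: "continuous_on UNIV \<tau>" "continuous_on UNIV (inv \<tau>)"
  "\<And>x. inv \<tau> (\<tau> x) = x" "\<And>x. \<tau> (inv \<tau> x) = x"
proof -
  obtain t' where t: "homeomorphism UNIV UNIV \<tau> t'" using LG unfolding lifted_graph_def by blast
  have a: "\<And>x. t' (\<tau> x) = x" "\<And>y. \<tau> (t' y) = y" "continuous_on UNIV \<tau>" "continuous_on UNIV t'"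
    using t unfolding homeomorphism_def by auto
  have "inv \<tau> = t'" by (rule inv_equality) (use a in auto)
  then show "continuous_on UNIV \<tau>" "continuous_on UNIV (inv \<tau>)"
    "\<And>x. inv \<tau> (\<tau> x) = x" "\<And>x. \<tau> (inv \<tau> x) = x" using a by auto
qed

lemma h_inj: "h x = h y \<Longrightarrow> x = y"
proof -
  obtain h' where "homeomorphism UNIV (range h) h h'" using LG unfolding lifted_graph_def by blast
  then have "\<And>x. h' (h x) = x" unfolding homeomorphism_def by auto
  then show "h x = h y \<Longrightarrow> x = y" by metis
qed

lemma tau_h: "\<tau> (h x) = h (x + 1)" using LG unfolding lifted_graph_def by auto

lemma itau_h: "inv \<tau> (h x) = h (x - 1)"
proof -
  have "\<tau> (h (x - 1)) = h x" using tau_h[of "x - 1"] by simp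
  then have "inv \<tau> (h x) = inv \<tau> (\<tau> (h (x - 1)))" by simp
  also have "\<dots> = h (x - 1)" by (rule tau_props(3))
  finally show ?thesis .
qed

lemma tr_0: "tr \<tau> 0 x = x" by (simp add: tr_def)

lemma tr_succ: "tr \<tau> (m + 1) x = \<tau> (tr \<tau> m x)"
proof (cases "m \<ge> 0")
  case True
  then have "nat (m + 1) = Suc (nat m)" by simp
  then show ?thesis using True by (simp add: tr_def)
next
  case False
  show ?thesis
  proof (cases "m = -1")
    case True then show ?thesis by (simp add: tr_def tau_props(4))
  next
    case F: False
    then have m: "m + 1 < 0" using False by simp
    then have "nat (- m) = Suc (nat (- (m + 1)))" by simp
    then have "tr \<tau> m x = inv \<tau> (tr \<tau> (m + 1) x)" using m False by (simp add: tr_def)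
    then show ?thesis by (simp add: tau_props(4))
  qed
qed

lemma tr_pred: "tr \<tau> (m - 1) x = inv \<tau> (tr \<tau> m x)"
proof -
  have "tr \<tau> m x = \<tau> (tr \<tau> (m - 1) x)" using tr_succ[of "m - 1" x] by simp
  then show ?thesis using tau_props(3) by metis
qed

lemma tr_add: "tr \<tau> (m + k) x = tr \<tau> m (tr \<tau> k x)"
proof (induction m rule: int_induct[where k = 0])
  case base then show ?case by (simp add: tr_0)
next
  case (step1 i)
  have "tr \<tau> (i + 1 + k) x = tr \<tau> ((i + k) + 1) x" by (simp add: algebra_simps)
  also have "\<dots> = \<tau> (tr \<tau> (i + k) x)" by (rule tr_succ)
  also have "\<dots> = tr \<tau> (i + 1) (tr \<tau> k x)" using step1 tr_succ by simp
  finally show ?case .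
next
  case (step2 i)
  have "tr \<tau> (i - 1 + k) x = tr \<tau> ((i + k) - 1) x" by (simp add: algebra_simps)
  also have "\<dots> = inv \<tau> (tr \<tau> (i + k) x)" by (rule tr_pred)
  also have "\<dots> = tr \<tau> (i - 1) (tr \<tau> k x)" using step2 tr_pred by simp
  finally show ?case .
qed

lemma tr_inv1: "tr \<tau> (- m) (tr \<tau> m x) = x"
  using tr_add[of "- m" m x] by (simp add: tr_0)

lemma tr_inv2: "tr \<tau> m (tr \<tau> (- m) x) = x"
  using tr_add[of m "- m" x] by (simp add: tr_0)

lemma tr_h: "tr \<tau> m (h u) = h (u + of_int m)"
proof (induction m rule: int_induct[where k = 0])
  case base then show ?case by (simp add: tr_0)
next
  case (step1 i)
  have "tr \<tau> (i + 1) (h u) = \<tau> (tr \<tau> i (h u))" by (rule tr_succ)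
  also have "\<dots> = h (u + of_int i + 1)" using step1 tau_h by simp
  finally show ?case by (simp add: add.assoc)
next
  case (step2 i)
  have "tr \<tau> (i - 1) (h u) = inv \<tau> (tr \<tau> i (h u))" by (rule tr_pred)
  also have "\<dots> = h (u + of_int i - 1)" using step2 itau_h by simp
  finally show ?case by (simp add: add_diff_eq)
qed

lemma F_tau: "F (\<tau> x) = \<tau> (F x)" using deg unfolding degree_one_def by blast

lemma F_itau: "F (inv \<tau> x) = inv \<tau> (F x)"
proof -
  have "\<tau> (F (inv \<tau> x)) = F x" using F_tau[of "inv \<tau> x"] tau_props(4) by simp
  then show ?thesis using tau_props(3) by metis
qed

lemma tr_F: "F (tr \<tau> m x) = tr \<tau> m (F x)"
proof (induction m rule: int_induct[where k = 0])
  case base then show ?case by (simp add: tr_0)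
next
  case (step1 i)
  then show ?case using tr_succ F_tau by simp
next
  case (step2 i)
  then show ?case using tr_pred F_itau by simp
qed

lemma tr_Fn: "(F ^^ n) (tr \<tau> m x) = tr \<tau> m ((F ^^ n) x)"
  by (induction n) (simp_all add: tr_F)

lemma tr_cont: "continuous_on UNIV (tr \<tau> m)"
proof (induction m rule: int_induct[where k = 0])
  case base
  have "tr \<tau> 0 = id" by (rule ext) (simp add: tr_0)
  then show ?case by (simp add: continuous_on_id)
next
  case (step1 i)
  have e: "tr \<tau> (i + 1) = \<tau> \<circ> tr \<tau> i" by (rule ext) (simp add: tr_succ)
  show ?case unfolding e
    by (rule continuous_on_compose[OF step1(2) continuous_on_subset[OF tau_props(1) subset_UNIV]])
next
  case (step2 i)
  have e: "tr \<tau> (i - 1) = inv \<tau> \<circ> tr \<tau> i" by (rule ext) (simp add: tr_pred)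
  show ?case unfolding e
    by (rule continuous_on_compose[OF step2(2) continuous_on_subset[OF tau_props(2) subset_UNIV]])
qed

lemma tr_closure: "tr \<tau> m ` closure Y = closure (tr \<tau> m ` Y)"
  by (rule homeo_closure[where f="tr \<tau> m" and g="tr \<tau> (- m)"]) (simp_all add: tr_inv1 tr_inv2 tr_cont)

lemma tr_R: "tr \<tau> m y \<in> range h \<longleftrightarrow> y \<in> range h"
proof
  assume "tr \<tau> m y \<in> range h"
  then obtain u where "tr \<tau> m y = h u" by auto
  then have "y = tr \<tau> (- m) (h u)" using tr_inv1 by metis
  then show "y \<in> range h" using tr_h by simp
next
  assume "y \<in> range h"
  then show "tr \<tau> m y \<in> range h" using tr_h by auto
qed

lemma cc_image:
  assumes cf: "continuous_on UNIV f" and nR: "\<And>y. y \<notin> range h \<Longrightarrow> f y \<notin> range h" and x: "x \<notin> range h"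
  shows "f ` connected_component_set (- range h) x \<subseteq> connected_component_set (- range h) (f x)"
proof (rule connected_component_maximal)
  show "f x \<in> f ` connected_component_set (- range h) x" using x by simp
  show "connected (f ` connected_component_set (- range h) x)"
    by (rule connected_continuous_image[OF continuous_on_subset[OF cf subset_UNIV] connected_connected_component])
  show "f ` connected_component_set (- range h) x \<subseteq> - range h"
  proof
    fix z assume "z \<in> f ` connected_component_set (- range h) x"
    then obtain y where y: "y \<in> connected_component_set (- range h) x" "z = f y" by blast
    have "y \<in> - range h" by (rule subsetD[OF connected_component_subset y(1)])
    then have "f y \<notin> range h" using nR by simp
    then show "z \<in> - range h" using y(2) by simp
  qed
qed

lemma comp_unique: "C \<in> components (- range h) \<Longrightarrow> \<exists>!y. y \<in> closure C \<inter> range h"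
proof -
  have "\<forall>C \<in> components (- range h). fin_graph (closure C) \<and> (\<exists>!y. y \<in> closure C \<inter> range h)"
    using conjunct1[OF conjunct2[OF conjunct2[OF conjunct2[OF conjunct2[OF LG[unfolded lifted_graph_def]]]]]] .
  then show "C \<in> components (- range h) \<Longrightarrow> \<exists>!y. y \<in> closure C \<inter> range h" by blast
qed

lemma retr_tr: "retr h (tr \<tau> m x) = tr \<tau> m (retr h x)"
proof (cases "x \<in> range h")
  case True
  then show ?thesis using tr_R unfolding retr_def by simp
next
  case False
  let ?f = "tr \<tau> m" and ?g = "tr \<tau> (- m)"
  have fx: "?f x \<notin> range h" using False tr_R by blast
  let ?K = "connected_component_set (- range h) x"
  let ?K' = "connected_component_set (- range h) (?f x)"
  have s1: "?f ` ?K \<subseteq> ?K'" by (rule cc_image[OF tr_cont _ False]) (use tr_R in blast)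
  have s2: "?g ` ?K' \<subseteq> connected_component_set (- range h) (?g (?f x))"
    by (rule cc_image[OF tr_cont _ fx]) (use tr_R in blast)
  have "?K' \<subseteq> ?f ` ?K"
  proof
    fix y assume "y \<in> ?K'"
    then have "?g y \<in> ?K" using s2 tr_inv1 by auto
    then show "y \<in> ?f ` ?K" using tr_inv2[of m y] by (metis image_eqI)
  qed
  then have KK: "?K' = ?f ` ?K" using s1 by blast
  have Kc: "?K \<in> components (- range h)" using False by (auto simp: components_iff)
  have Kc': "?K' \<in> components (- range h)" using fx by (auto simp: components_iff)
  define y0 where "y0 = (THE y. y \<in> closure ?K \<inter> range h)"
  have y0: "y0 \<in> closure ?K \<inter> range h" unfolding y0_def by (rule theI'[OF comp_unique[OF Kc]])
  have "?f y0 \<in> closure ?K' \<inter> range h"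
    using y0 tr_R unfolding KK tr_closure[symmetric] by blast
  then have "(THE y. y \<in> closure ?K' \<inter> range h) = ?f y0"
    by (rule the1_equality[OF comp_unique[OF Kc']])
  then show ?thesis using False fx unfolding retr_def y0_def by simp
qed

lemma W_sub: "(\<Union>n. (F ^^ n) ` range h) \<subseteq> TR h F"
  unfolding TR_def by (rule closure_subset)

lemma R_TR: "h u \<in> TR h F"
proof -
  have "h u \<in> (F ^^ 0) ` range h" by simp
  then show ?thesis using W_sub by blast
qed

lemma TR_tr: "x \<in> TR h F \<Longrightarrow> tr \<tau> m x \<in> TR h F"
proof -
  let ?W = "\<Union>n. (F ^^ n) ` range h"
  have "tr \<tau> m ` ?W \<subseteq> ?W"
  proof
    fix y assume "y \<in> tr \<tau> m ` ?W"
    then obtain n u where y: "y = tr \<tau> m ((F ^^ n) (h u))" by auto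
    then have "y = (F ^^ n) (h (u + of_int m))" using tr_Fn[of n m "h u", symmetric] tr_h by simp
    then show "y \<in> ?W" by blast
  qed
  then have "closure (tr \<tau> m ` ?W) \<subseteq> closure ?W" by (rule closure_mono)
  then have "tr \<tau> m ` TR h F \<subseteq> TR h F" unfolding TR_def tr_closure .
  then show "x \<in> TR h F \<Longrightarrow> tr \<tau> m x \<in> TR h F" by blast
qed

lemma TR_tr_iff: "tr \<tau> m x \<in> TR h F \<longleftrightarrow> x \<in> TR h F"
  using TR_tr[of x m] TR_tr[of "tr \<tau> m x" "- m"] tr_inv1 by auto

lemma int_tr: "x \<in> interior (TR h F) \<Longrightarrow> tr \<tau> m x \<in> interior (TR h F)"
proof (rule ccontr)
  assume x: "x \<in> interior (TR h F)" and n: "tr \<tau> m x \<notin> interior (TR h F)"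
  then have "tr \<tau> m x \<in> closure (- TR h F)" by (simp add: closure_complement)
  then have "tr \<tau> (- m) (tr \<tau> m x) \<in> tr \<tau> (- m) ` closure (- TR h F)" by blast
  then have "x \<in> closure (tr \<tau> (- m) ` (- TR h F))" using tr_inv1 tr_closure by metis
  moreover have "tr \<tau> (- m) ` (- TR h F) \<subseteq> - TR h F" using TR_tr_iff by blast
  ultimately have "x \<in> closure (- TR h F)" using closure_mono by blast
  then show False using x by (simp add: closure_complement)
qed

lemma X_int: "Xset h F \<inter> interior (TR h F) = {}"
  unfolding Xset_def using closure_complement by blast

lemma X_tr: assumes "x \<in> Xset h F" "tr \<tau> m x \<in> Xset h F" shows "m = 0"
proof -
  obtain u where u: "u \<in> {0..<1}" "retr h x = h u" using assms(1) unfolding Xset_def by auto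
  obtain v where v: "v \<in> {0..<1}" "retr h (tr \<tau> m x) = h v" using assms(2) unfolding Xset_def by auto
  have "h v = h (u + of_int m)" using u v retr_tr tr_h by metis
  then have "v = u + of_int m" by (rule h_inj)
  then have "of_int m = v - u" by simp
  then have "real_of_int m < 1" "real_of_int m > -1" using u v by auto
  then show "m = 0" by linarith
qed

lemma branches_X:
  assumes B: "B \<in> branches h F"
  shows "B \<subseteq> Xset h F"
proof -
  let ?S = "- TR h F \<inter> {x. retr h x \<in> h ` {0..<1}}"
  obtain D where D: "D \<in> components ?S" "B = closure D" using B unfolding branches_def by auto
  have DS: "D \<subseteq> ?S" using D(1) by (rule in_components_subset)
  obtain d where d: "d \<in> D" using in_components_nonempty[OF D(1)] by blast
  have RT: "range h \<subseteq> TR h F" using R_TR by blast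
  have DR: "D \<subseteq> - range h" using DS RT by blast
  have dR: "d \<notin> range h" using d DR by blast
  let ?K = "connected_component_set (- range h) d"
  have DK: "D \<subseteq> ?K"
    by (rule connected_component_maximal[OF d in_components_connected[OF D(1)] DR])
  have Kc: "?K \<in> components (- range h)" using dR by (auto simp: components_iff)
  define y0 where "y0 = (THE y. y \<in> closure ?K \<inter> range h)"
  have y0: "y0 \<in> closure ?K \<inter> range h" unfolding y0_def by (rule theI'[OF comp_unique[OF Kc]])
  have rd: "retr h d = y0" using dR unfolding retr_def y0_def by simp
  have rd2: "retr h d \<in> h ` {0..<1}" using d DS by blast
  have "retr h x = y0" if x: "x \<in> closure D" for x
  proof (cases "x \<in> range h")
    case True
    then have "x \<in> closure ?K \<inter> range h" using x closure_mono[OF DK] by blast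
    then have "x = y0" using comp_unique[OF Kc] y0 by blast
    then show ?thesis using True unfolding retr_def by simp
  next
    case False
    have "connected (insert x D)"
      by (rule connected_intermediate_closure[OF in_components_connected[OF D(1)]]) (use x closure_subset in auto)
    moreover have "insert x D \<subseteq> - range h" using False DR by blast
    ultimately have "insert x D \<subseteq> ?K" using d by (intro connected_component_maximal) auto
    then have "x \<in> ?K" by blast
    then have "connected_component_set (- range h) x = ?K" by (rule connected_component_eq)
    then show ?thesis using False unfolding retr_def y0_def by simp
  qed
  then have "\<forall>x\<in>B. retr h x \<in> h ` {0..<1}" using rd rd2 D(2) by auto
  moreover have "B \<subseteq> closure (- TR h F)" using D(2) DS closure_mono by blast
  ultimately show ?thesis unfolding Xset_def by blast
qed

end


locale cg0 =
  fixes P :: "'a set set" and cy :: "'a set list \<Rightarrow> 'a set" and Phi :: "'a set \<Rightarrow> 'a set \<Rightarrow> 'a set"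
  assumes finP: "finite P"
  and cy_single: "A \<in> P \<Longrightarrow> cy [A] = A"
  and cy_snoc: "w \<noteq> [] \<Longrightarrow> set w \<subseteq> P \<Longrightarrow> A \<in> P \<Longrightarrow> cy (w @ [A]) = Phi A (cy w)"
  and Phi_sub: "Phi A C \<subseteq> A"
  and Phi_mono: "C \<subseteq> C' \<Longrightarrow> Phi A C \<subseteq> Phi A C'"
  and Phi_empty: "Phi A {} = {}"
begin

lemma L_app:
  assumes "u \<noteq> []" "set u \<subseteq> P" "u' \<noteq> []" "set u' \<subseteq> P" "set v \<subseteq> P" "cy u = cy u'"
  shows "cy (u @ v) = cy (u' @ v)"
  using assms(5)
proof (induction v rule: rev_induct)
  case Nil
  then show ?case using assms by simp
next
  case (snoc x xs)
  then have "cy (u @ xs @ [x]) = Phi x (cy (u @ xs))"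
    using assms cy_snoc[of "u @ xs" x] by simp
  moreover have "cy (u' @ xs @ [x]) = Phi x (cy (u' @ xs))"
    using assms snoc cy_snoc[of "u' @ xs" x] by simp
  ultimately show ?case using snoc by simp
qed

lemma L_empty:
  assumes "u \<noteq> []" "set u \<subseteq> P" "set v \<subseteq> P" "cy u = {}"
  shows "cy (u @ v) = {}"
  using assms(3)
proof (induction v rule: rev_induct)
  case Nil
  then show ?case using assms by simp
next
  case (snoc x xs)
  then have "cy (u @ xs @ [x]) = Phi x (cy (u @ xs))"
    using assms cy_snoc[of "u @ xs" x] by simp
  then show ?case using snoc Phi_empty by simp
qed

lemma L_last:
  assumes "w \<noteq> []" "set w \<subseteq> P"
  shows "cy w \<subseteq> last w"
proof (cases w rule: rev_exhaust)
  case Nil then show ?thesis using assms by simp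
next
  case (snoc ys y)
  show ?thesis
  proof (cases "ys = []")
    case True then show ?thesis using snoc assms cy_single by simp
  next
    case False then show ?thesis using snoc assms cy_snoc[of ys y] Phi_sub by simp
  qed
qed

lemma L_suffix:
  assumes "v \<noteq> []" "set (u @ v) \<subseteq> P"
  shows "cy (u @ v) \<subseteq> cy v"
  using assms
proof (induction v rule: rev_induct)
  case Nil then show ?case by simp
next
  case (snoc x xs)
  show ?case
  proof (cases "xs = []")
    case True
    show ?thesis
    proof (cases "u = []")
      case True then show ?thesis by simp
    next
      case False
      then show ?thesis using \<open>xs = []\<close> snoc.prems cy_snoc[of u x] Phi_sub cy_single[of x] by simp
    qed
  next
    case False
    have "cy (u @ xs @ [x]) = Phi x (cy (u @ xs))"
      using snoc.prems False cy_snoc[of "u @ xs" x] by simp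
    also have "\<dots> \<subseteq> Phi x (cy xs)" using snoc False by (intro Phi_mono) auto
    also have "\<dots> = cy (xs @ [x])" using snoc.prems False cy_snoc[of xs x] by simp
    finally show ?thesis by simp
  qed
qed

definition full :: "'a set list \<Rightarrow> nat \<Rightarrow> bool" where
  "full w j \<longleftrightarrow> cy (take (Suc j) w) = w ! j"

definition lf :: "'a set list \<Rightarrow> nat" where
  "lf w = (GREATEST j. j < length w \<and> full w j)"

definition G :: "'a set list \<Rightarrow> 'a set list" where
  "G w = drop (lf w) w"

lemma full0: "w \<in> words P \<Longrightarrow> full w 0"
  unfolding full_def words_def
  by (cases w) (auto intro!: cy_single)

lemma lf_prop:
  assumes "w \<in> words P"
  shows "lf w < length w \<and> full w (lf w)"
proof -
  have ne: "0 < length w" using assms by (auto simp: words_def)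
  have "(\<lambda>j. j < length w \<and> full w j) (Greatest (\<lambda>j. j < length w \<and> full w j))"
  proof (rule GreatestI_nat[of "\<lambda>j. j < length w \<and> full w j" 0 "length w"])
    show "0 < length w \<and> full w 0" using ne full0[OF assms] by blast
    fix y assume "y < length w \<and> full w y" then show "y \<le> length w" by (blast intro: less_imp_le)
  qed
  then show ?thesis unfolding lf_def by blast
qed

lemma lf_ge:
  assumes "w \<in> words P" "j < length w" "full w j"
  shows "j \<le> lf w"
  unfolding lf_def
proof (rule Greatest_le_nat[of "\<lambda>j. j < length w \<and> full w j" j "length w"])
  show "j < length w \<and> full w j" using assms by blast
  fix y assume "y < length w \<and> full w y" then show "y \<le> length w" by (blast intro: less_imp_le)
qed

lemma FS:
  assumes w: "w \<in> words P" and j: "j < length w" "full w j" and t: "j \<le> t" "t < length w"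
  shows "full w t \<longleftrightarrow> full (drop j w) (t - j)"
proof -
  have st: "Suc t = Suc j + (t - j)" using t by simp
  have e1: "take (Suc t) w = take (Suc j) w @ take (t - j) (drop (Suc j) w)"
    by (subst st) (rule take_add)
  have e2: "take (Suc (t - j)) (drop j w) = [w ! j] @ take (t - j) (drop (Suc j) w)"
    using j by (simp add: Cons_nth_drop_Suc[symmetric])
  have sw: "set w \<subseteq> P" "w \<noteq> []" using w by (auto simp: words_def)
  have wj: "w ! j \<in> P" using sw j by auto
  have "cy (take (Suc j) w) = cy [w ! j]" using j(2) cy_single[OF wj] by (simp add: full_def)
  moreover have "set (take (t - j) (drop (Suc j) w)) \<subseteq> P"
    using sw by (meson order_trans set_drop_subset set_take_subset)
  moreover have "set (take (Suc j) w) \<subseteq> P" using sw by (meson order_trans set_take_subset)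
  moreover have "take (Suc j) w \<noteq> []" using sw by simp
  ultimately have "cy (take (Suc t) w) = cy (take (Suc (t - j)) (drop j w))"
    unfolding e1 e2 using wj by (intro L_app) auto
  moreover have "w ! t = drop j w ! (t - j)" using t j by simp
  ultimately show ?thesis unfolding full_def by simp
qed

lemma drop_words: "w \<in> words P \<Longrightarrow> j < length w \<Longrightarrow> drop j w \<in> words P"
  by (auto simp: words_def dest: in_set_dropD)

lemma lf_drop:
  assumes w: "w \<in> words P" and j: "j < length w" "full w j"
  shows "lf w = j + lf (drop j w)"
proof -
  have dw: "drop j w \<in> words P" using drop_words w j by blast
  have a: "lf w < length w \<and> full w (lf w)" using lf_prop[OF w] .
  have b: "lf (drop j w) < length (drop j w) \<and> full (drop j w) (lf (drop j w))" using lf_prop[OF dw] .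
  have jl: "j \<le> lf w" using lf_ge[OF w j] .
  have "full (drop j w) (lf w - j)" using FS[OF w j jl] a by simp
  moreover have "lf w - j < length (drop j w)" using a jl by (simp add: diff_less_mono)
  ultimately have "lf w - j \<le> lf (drop j w)" using lf_ge[OF dw] by simp
  moreover have "j + lf (drop j w) \<le> lf w"
  proof -
    have c: "j + lf (drop j w) < length w" using b j(1) by (simp add: less_diff_conv add.commute)
    have "full w (j + lf (drop j w))" using FS[OF w j, of "j + lf (drop j w)"] b c by simp
    then show ?thesis using lf_ge[OF w] c by simp
  qed
  ultimately show ?thesis using jl by linarith
qed

lemma G_drop:
  assumes w: "w \<in> words P" and j: "j < length w" "full w j"
  shows "G w = G (drop j w)"
  unfolding G_def using lf_drop[OF assms] by (simp add: add.commute)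

lemma G_words: "w \<in> words P \<Longrightarrow> G w \<in> words P"
  unfolding G_def using drop_words lf_prop by blast

lemma G_G: assumes w: "w \<in> words P" shows "G (G w) = G w"
proof -
  have "lf w = lf w + lf (G w)" using lf_drop[OF w] lf_prop[OF w] unfolding G_def by blast
  then show ?thesis by (simp add: G_def)
qed

lemma cy_G: assumes w: "w \<in> words P" shows "cy (G w) = cy w"
proof -
  let ?l = "lf w"
  have a: "?l < length w" "full w ?l" using lf_prop[OF w] by auto
  have sw: "set w \<subseteq> P" "w \<noteq> []" using w by (auto simp: words_def)
  have wj: "w ! ?l \<in> P" using sw a by auto
  have e1: "w = take (Suc ?l) w @ drop (Suc ?l) w" by simp
  have e2: "G w = [w ! ?l] @ drop (Suc ?l) w" unfolding G_def using a by (simp add: Cons_nth_drop_Suc)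
  have "cy (take (Suc ?l) w @ drop (Suc ?l) w) = cy ([w ! ?l] @ drop (Suc ?l) w)"
    apply (rule L_app)
    using sw a wj cy_single[OF wj] unfolding full_def
    by (auto dest: in_set_takeD in_set_dropD)
  then show ?thesis using e1 e2 by metis
qed

lemma G_snoc:
  assumes w: "w \<in> words P" and A: "A \<in> P"
  shows "G (w @ [A]) = (if cy (w @ [A]) = A then [A] else G w @ [A])"
proof -
  have wa: "w @ [A] \<in> words P" using w A by (auto simp: words_def)
  have eq: "full (w @ [A]) j \<longleftrightarrow> full w j" if "j < length w" for j
    using that by (simp add: full_def nth_append)
  have fl: "full (w @ [A]) (length w) \<longleftrightarrow> cy (w @ [A]) = A"
    by (simp add: full_def)
  show ?thesis
  proof (cases "cy (w @ [A]) = A")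
    case True
    then have "length w \<le> lf (w @ [A])" using lf_ge[OF wa, of "length w"] fl by simp
    moreover have "lf (w @ [A]) < length (w @ [A])" using lf_prop[OF wa] by blast
    ultimately have "lf (w @ [A]) = length w" by simp
    then show ?thesis using True by (simp add: G_def)
  next
    case False
    have a: "lf w < length w" "full w (lf w)" using lf_prop[OF w] by auto
    have "lf w \<le> lf (w @ [A])" using lf_ge[OF wa, of "lf w"] a eq by simp
    moreover have "lf (w @ [A]) \<le> lf w"
    proof -
      have b: "lf (w @ [A]) < Suc (length w)" "full (w @ [A]) (lf (w @ [A]))" using lf_prop[OF wa] by auto
      then have "lf (w @ [A]) \<noteq> length w" using False fl by auto
      then have "lf (w @ [A]) < length w" using b by simp
      then show ?thesis using lf_ge[OF w] b eq by simp
    qed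
    ultimately have "lf (w @ [A]) = lf w" by simp
    then show ?thesis using False a by (simp add: G_def)
  qed
qed

end


context cg0
begin

definition weqL :: "'a set list \<Rightarrow> 'a set list \<Rightarrow> bool" where
  "weqL w v \<longleftrightarrow>
     (let n = length w - 1; m = length v - 1 in
      \<exists>k \<le> min n m. (\<forall>i\<le>k. w ! (n - i) = v ! (m - i)) \<and>
        cy (take (n - k + 1) w) = w ! (n - k) \<and>
        w ! (n - k) = v ! (m - k) \<and>
        v ! (m - k) = cy (take (m - k + 1) v))"

lemma weqL_iff:
  assumes w: "w \<in> words P" and v: "v \<in> words P"
  shows "weqL w v \<longleftrightarrow> G w = G v"
proof
  assume "weqL w v"
  then obtain k where k: "k \<le> length w - 1" "k \<le> length v - 1"
    and eq: "\<forall>i\<le>k. w ! (length w - 1 - i) = v ! (length v - 1 - i)"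
    and fw: "cy (take (length w - 1 - k + 1) w) = w ! (length w - 1 - k)"
    and fv: "cy (take (length v - 1 - k + 1) v) = v ! (length v - 1 - k)"
    unfolding weqL_def Let_def by auto
  have lw: "length w > 0" "length v > 0" using w v by (auto simp: words_def)
  have f1: "full w (length w - 1 - k)" using fw lw k unfolding full_def
    by (metis Suc_eq_plus1)
  have f2: "full v (length v - 1 - k)" using fv lw k unfolding full_def
    by (metis Suc_eq_plus1)
  have d: "drop (length w - 1 - k) w = drop (length v - 1 - k) v"
  proof (rule nth_equalityI)
    have "length w - (length w - 1 - k) = Suc k" "length v - (length v - 1 - k) = Suc k"
      using k lw by arith+
    then show "length (drop (length w - 1 - k) w) = length (drop (length v - 1 - k) v)"
      by simp
    fix i assume "i < length (drop (length w - 1 - k) w)"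
    then have i: "i \<le> k" using k lw by simp
    have ix: "length w - 1 - k + i = length w - 1 - (k - i)" using i k lw by arith
    have "drop (length w - 1 - k) w ! i = w ! (length w - 1 - k + i)"
      using k lw by simp
    also have "\<dots> = w ! (length w - 1 - (k - i))" by (simp only: ix)
    finally have "drop (length w - 1 - k) w ! i = w ! (length w - 1 - (k - i))" .
    also have "\<dots> = v ! (length v - 1 - (k - i))"
    proof -
      have "k - i \<le> k" by simp
      then show ?thesis using eq by blast
    qed
    also have "\<dots> = drop (length v - 1 - k) v ! i"
    proof -
      have iy: "length v - 1 - k + i = length v - 1 - (k - i)" using i k lw by arith
      have "drop (length v - 1 - k) v ! i = v ! (length v - 1 - k + i)"
        using k lw by simp
      also have "\<dots> = v ! (length v - 1 - (k - i))" by (simp only: iy)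
      finally show ?thesis by simp
    qed
    finally show "drop (length w - 1 - k) w ! i = drop (length v - 1 - k) v ! i" .
  qed
  have "G w = G (drop (length w - 1 - k) w)" using G_drop[OF w _ f1] lw by simp
  also have "\<dots> = G (drop (length v - 1 - k) v)" using d by simp
  also have "\<dots> = G v" using G_drop[OF v _ f2] lw by simp
  finally show "G w = G v" .
next
  assume GG: "G w = G v"
  have lw: "length w > 0" "length v > 0" using w v by (auto simp: words_def)
  have a: "lf w < length w" "full w (lf w)" using lf_prop[OF w] by auto
  have b: "lf v < length v" "full v (lf v)" using lf_prop[OF v] by auto
  define k where "k = length w - 1 - lf w"
  have lg: "length (G w) = length w - lf w" "length (G v) = length v - lf v" by (simp_all add: G_def)
  have k2: "k = length v - 1 - lf v" using GG lg a b k_def by simp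
  have nk1: "length w - 1 - k = lf w" using a k_def by simp
  have nk2: "length v - 1 - k = lf v" using b k2 by simp
  have eq: "w ! (length w - 1 - i) = v ! (length v - 1 - i)" if i: "i \<le> k" for i
  proof -
    have "w ! (length w - 1 - i) = G w ! (k - i)"
      unfolding G_def using i a k_def by (simp add: nth_drop)
    also have "\<dots> = G v ! (k - i)" using GG by simp
    also have "\<dots> = v ! (length v - 1 - i)"
      unfolding G_def using i b k2 by (simp add: nth_drop)
    finally show ?thesis .
  qed
  show "weqL w v"
    unfolding weqL_def Let_def
  proof (rule exI[of _ k])
    have f1: "cy (take (lf w + 1) w) = w ! lf w" using a(2) unfolding full_def by simp
    have f2: "cy (take (lf v + 1) v) = v ! lf v" using b(2) unfolding full_def by simp
    have e0: "w ! lf w = v ! lf v" using eq[OF order_refl] unfolding nk1 nk2 .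
    have kb1: "k \<le> length w - 1" unfolding k_def by arith
    have kb2: "k \<le> length v - 1" unfolding k2 by arith
    have kb: "k \<le> min (length w - 1) (length v - 1)" using kb1 kb2 by simp
    show "k \<le> min (length w - 1) (length v - 1) \<and>
      (\<forall>i\<le>k. w ! (length w - 1 - i) = v ! (length v - 1 - i)) \<and>
      cy (take (length w - 1 - k + 1) w) = w ! (length w - 1 - k) \<and>
      w ! (length w - 1 - k) = v ! (length v - 1 - k) \<and>
      v ! (length v - 1 - k) = cy (take (length v - 1 - k + 1) v)"
      unfolding nk1 nk2
    proof (intro conjI allI impI)
      show "k \<le> min (length w - 1) (length v - 1)" by (rule kb)
      fix i assume "i \<le> k" then show "w ! (length w - 1 - i) = v ! (length v - 1 - i)" by (rule eq)
    next
      show "cy (take (lf w + 1) w) = w ! lf w" by (rule f1)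
      show "w ! lf w = v ! lf v" by (rule e0)
      show "v ! lf v = cy (take (lf v + 1) v)" by (rule f2[symmetric])
    qed
  qed
qed

definition clsL :: "'a set list \<Rightarrow> 'a set list set" where
  "clsL w = {v \<in> words P. weqL w v}"

definition HL :: "'a set list set \<Rightarrow> nat" where
  "HL \<alpha> = (let w = (SOME w. w \<in> \<alpha>) in
        length w - 1 - (GREATEST i. i < length w \<and> weqL w (drop i w)))"

definition VL where "VL = {clsL w | w. w \<in> words P \<and> cy w \<noteq> {}}"

definition EL where
  "EL = {(\<alpha>, \<beta>). \<alpha> \<in> VL \<and> \<beta> \<in> VL \<and>
        (\<exists>w A. w \<in> words P \<and> A \<in> P \<and> \<alpha> = clsL w \<and> \<beta> = clsL (w @ [A]))}"

lemma clsL_eq': "w \<in> words P \<Longrightarrow> clsL w = {v \<in> words P. G v = G w}"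
  unfolding clsL_def using weqL_iff by auto

lemma clsL_G: "w \<in> words P \<Longrightarrow> clsL (G w) = clsL w"
  using clsL_eq' G_G G_words by auto

lemma clsL_inj: "w \<in> words P \<Longrightarrow> v \<in> words P \<Longrightarrow> clsL w = clsL v \<Longrightarrow> G w = G v"
  using clsL_eq' by blast

lemma in_clsL: "w \<in> words P \<Longrightarrow> w \<in> clsL w"
  using clsL_eq' by blast

lemma drop_G_le:
  assumes v: "v \<in> words P" and i: "i \<le> lf v"
  shows "G (drop i v) = G v"
proof -
  have b: "lf v < length v" "full v (lf v)" using lf_prop[OF v] by auto
  have sv: "set v \<subseteq> P" using v by (auto simp: words_def)
  have dv: "drop i v \<in> words P" using drop_words[OF v] i b by simp
  have e: "take (Suc (lf v - i)) (drop i v) = drop i (take (Suc (lf v)) v)"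
    using i by (simp add: take_drop Suc_diff_le)
  have ne: "drop i (take (Suc (lf v)) v) \<noteq> []" using i b by simp
  have "cy (take (Suc (lf v)) v) = cy (take i (take (Suc (lf v)) v) @ drop i (take (Suc (lf v)) v))"
    by (simp only: append_take_drop_id)
  also have "\<dots> \<subseteq> cy (drop i (take (Suc (lf v)) v))"
    by (rule L_suffix[OF ne]) (use sv in \<open>auto dest: in_set_takeD in_set_dropD\<close>)
  finally have "cy (take (Suc (lf v)) v) \<subseteq> cy (drop i (take (Suc (lf v)) v))" .
  moreover have "cy (drop i (take (Suc (lf v)) v)) \<subseteq> last (drop i (take (Suc (lf v)) v))"
    using L_last[OF ne] sv by (meson in_set_dropD in_set_takeD subset_iff)
  moreover have "last (drop i (take (Suc (lf v)) v)) = v ! lf v"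
    using i b ne by (cases "length v = Suc (lf v)") (auto simp: last_conv_nth min_def)
  ultimately have "cy (drop i (take (Suc (lf v)) v)) = v ! lf v" using b unfolding full_def by auto
  then have f: "full (drop i v) (lf v - i)" unfolding full_def using e i b by simp
  have "G (drop i v) = G (drop (lf v - i) (drop i v))" using G_drop[OF dv _ f] i b by simp
  also have "\<dots> = G (G v)" using i by (simp add: G_def)
  also have "\<dots> = G v" using G_G[OF v] .
  finally show ?thesis .
qed

lemma HL_clsL:
  assumes w: "w \<in> words P"
  shows "HL (clsL w) = length (G w) - 1"
proof -
  define v where "v = (SOME v. v \<in> clsL w)"
  have "v \<in> clsL w" unfolding v_def using in_clsL[OF w] by (rule someI)
  then have v: "v \<in> words P" "G v = G w" using clsL_eq'[OF w] by auto
  have b: "lf v < length v" "full v (lf v)" using lf_prop[OF v(1)] by auto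
  have pi: "(i < length v \<and> weqL v (drop i v)) \<longleftrightarrow> i \<le> lf v" for i
  proof
    assume a: "i < length v \<and> weqL v (drop i v)"
    then have "G v = G (drop i v)" using weqL_iff v(1) drop_words by blast
    show "i \<le> lf v"
    proof (rule ccontr)
      assume "\<not> i \<le> lf v"
      then have "length (G (drop i v)) < length (G v)" unfolding G_def using a b by auto
      then show False using \<open>G v = G (drop i v)\<close> by simp
    qed
  next
    assume "i \<le> lf v"
    then show "i < length v \<and> weqL v (drop i v)"
      using drop_G_le[OF v(1)] b weqL_iff v(1) drop_words by auto
  qed
  have "(GREATEST i. i < length v \<and> weqL v (drop i v)) = lf v"
    by (rule Greatest_equality) (use pi in auto)
  then have "HL (clsL w) = length v - 1 - lf v" unfolding HL_def v_def Let_def by simp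
  also have "\<dots> = length (G w) - 1"
  proof -
    have "length (G w) = length v - lf v" using v(2) by (metis G_def length_drop)
    then show ?thesis by simp
  qed
  finally show ?thesis .
qed

lemma G_len: "w \<in> words P \<Longrightarrow> length (G w) \<ge> 1"
  using G_words by (auto simp: words_def Suc_le_eq)

lemma V_cy:
  assumes "clsL w \<in> VL" "w \<in> words P"
  shows "cy w \<noteq> {}"
proof -
  obtain u where u: "u \<in> words P" "cy u \<noteq> {}" "clsL w = clsL u" using assms unfolding VL_def by auto
  then have "G w = G u" using clsL_inj assms by blast
  then show ?thesis using cy_G u assms by metis
qed

lemma EH:
  assumes "(\<alpha>, \<beta>) \<in> EL"
  shows "HL \<beta> = 0 \<or> HL \<beta> = Suc (HL \<alpha>)"
proof -
  obtain w A where wa: "w \<in> words P" "A \<in> P" "\<alpha> = clsL w" "\<beta> = clsL (w @ [A])"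
    using assms unfolding EL_def by auto
  have wa2: "w @ [A] \<in> words P" using wa by (auto simp: words_def)
  show ?thesis using HL_clsL[OF wa(1)] HL_clsL[OF wa2] G_snoc[OF wa(1,2)] G_len[OF wa(1)] wa
    by (auto split: if_splits)
qed

lemma H0:
  assumes "\<alpha> \<in> VL" "HL \<alpha> = 0"
  shows "\<exists>A\<in>P. \<alpha> = clsL [A]"
proof -
  obtain w where w: "w \<in> words P" "\<alpha> = clsL w" using assms unfolding VL_def by auto
  have "length (G w) = 1" using HL_clsL[OF w(1)] G_len[OF w(1)] assms w by simp
  then obtain x where x: "G w = [x]" by (metis One_nat_def length_0_conv length_Suc_conv)
  then have "x \<in> P" using G_words[OF w(1)] by (auto simp: words_def)
  then show ?thesis using x clsL_G[OF w(1)] w by metis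
qed

lemma prefix_red:
  assumes s: "s \<in> words P" "G s = s" "cy s \<noteq> {}" and j: "1 \<le> j" "j \<le> length s"
  shows "take j s \<in> words P \<and> G (take j s) = take j s \<and> cy (take j s) \<noteq> {}"
proof -
  have ss: "set s \<subseteq> P" "s \<noteq> []" using s by (auto simp: words_def)
  have tw: "take j s \<in> words P" using ss j by (auto simp: words_def dest: in_set_takeD)
  have b: "lf s < length s" using lf_prop[OF s(1)] by auto
  have lf0: "lf s = 0"
  proof -
    have "length (drop (lf s) s) = length s" using s(2) by (simp add: G_def)
    then show ?thesis using b by simp
  qed
  have c: "lf (take j s) < length (take j s)" "full (take j s) (lf (take j s))" using lf_prop[OF tw] by auto
  have l: "lf (take j s) < j" using c j by simp
  have "take (Suc (lf (take j s))) (take j s) = take (Suc (lf (take j s))) s" using l by (simp add: min_def)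
  moreover have "take j s ! lf (take j s) = s ! lf (take j s)" using l by simp
  ultimately have "full s (lf (take j s))" using c unfolding full_def by simp
  then have "lf (take j s) \<le> 0" using lf_ge[OF s(1)] c lf0 j by fastforce
  then have G1: "G (take j s) = take j s" by (simp add: G_def)
  have "cy (take j s) \<noteq> {}"
  proof
    assume "cy (take j s) = {}"
    then have "cy (take j s @ drop j s) = {}"
      using L_empty[of "take j s" "drop j s"] tw ss by (auto simp: words_def dest: in_set_dropD)
    then show False using s(3) by simp
  qed
  then show ?thesis using tw G1 by simp
qed

end

locale cg = cg0 +
  assumes uniq: "s \<in> words P \<Longrightarrow> cy s \<noteq> {} \<Longrightarrow> A1 \<in> P \<Longrightarrow> A2 \<in> P \<Longrightarrow>
     Phi A1 (cy s) \<noteq> {} \<Longrightarrow> Phi A1 (cy s) \<noteq> A1 \<Longrightarrow> Phi A2 (cy s) \<noteq> {} \<Longrightarrow> Phi A2 (cy s) \<noteq> A2 \<Longrightarrow> A1 = A2"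
begin

lemma EU:
  assumes e1: "(\<alpha>, \<beta>1) \<in> EL" and e2: "(\<alpha>, \<beta>2) \<in> EL" and h1: "HL \<beta>1 > 0" and h2: "HL \<beta>2 > 0"
  shows "\<beta>1 = \<beta>2"
proof -
  obtain w1 A1 where a1: "w1 \<in> words P" "A1 \<in> P" "\<alpha> = clsL w1" "\<beta>1 = clsL (w1 @ [A1])"
    using e1 unfolding EL_def by auto
  obtain w2 A2 where a2: "w2 \<in> words P" "A2 \<in> P" "\<alpha> = clsL w2" "\<beta>2 = clsL (w2 @ [A2])"
    using e2 unfolding EL_def by auto
  have w1a: "w1 @ [A1] \<in> words P" and w2a: "w2 @ [A2] \<in> words P" using a1 a2 by (auto simp: words_def)
  have GG: "G w1 = G w2" using clsL_inj a1 a2 by metis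
  have av: "\<alpha> \<in> VL" "\<beta>1 \<in> VL" "\<beta>2 \<in> VL" using e1 e2 unfolding EL_def by auto
  have c1: "cy (w1 @ [A1]) \<noteq> A1"
    using h1 HL_clsL[OF w1a] G_snoc[OF a1(1,2)] a1 by (auto split: if_splits)
  have c2: "cy (w2 @ [A2]) \<noteq> A2"
    using h2 HL_clsL[OF w2a] G_snoc[OF a2(1,2)] a2 by (auto split: if_splits)
  have n1: "cy (w1 @ [A1]) \<noteq> {}" using V_cy av a1 w1a by metis
  have n2: "cy (w2 @ [A2]) \<noteq> {}" using V_cy av a2 w2a by metis
  have s: "G w1 \<in> words P" "cy (G w1) \<noteq> {}" using G_words a1 V_cy av cy_G by metis+
  have p1: "cy (w1 @ [A1]) = Phi A1 (cy (G w1))" using cy_snoc[of w1 A1] a1 cy_G[OF a1(1)] by (auto simp: words_def)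
  have p2: "cy (w2 @ [A2]) = Phi A2 (cy (G w1))" using cy_snoc[of w2 A2] a2 cy_G[OF a2(1)] GG by (auto simp: words_def)
  have "A1 = A2" using uniq[OF s a1(2) a2(2)] p1 p2 c1 c2 n1 n2 by simp
  then show ?thesis
    using a1 a2 G_snoc[OF a1(1,2)] G_snoc[OF a2(1,2)] c1 c2 GG clsL_G w1a w2a by metis
qed

end


lemma tr_sub: "r \<subseteq> s \<Longrightarrow> r\<^sup>+ \<subseteq> s\<^sup>+"
  using trancl_mono by blast

lemma sc_sub: "strongly_connected V E S \<Longrightarrow> S \<subseteq> V"
  unfolding strongly_connected_def by blast
lemma sc_ne: "strongly_connected V E S \<Longrightarrow> S \<noteq> {}"
  unfolding strongly_connected_def by blast
lemma sc_path: "strongly_connected V E S \<Longrightarrow> u \<in> S \<Longrightarrow> v \<in> S \<Longrightarrow> (u, v) \<in> (E \<inter> S \<times> S)\<^sup>+"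
  unfolding strongly_connected_def by blast
lemma sc_intro: "S \<noteq> {} \<Longrightarrow> S \<subseteq> V \<Longrightarrow> (\<And>u v. u \<in> S \<Longrightarrow> v \<in> S \<Longrightarrow> (u, v) \<in> (E \<inter> S \<times> S)\<^sup>+)
   \<Longrightarrow> strongly_connected V E S"
  unfolding strongly_connected_def by blast
lemma cc_sc: "conn_component V E C \<Longrightarrow> strongly_connected V E C"
  unfolding conn_component_def by blast
lemma cc_max: "conn_component V E C \<Longrightarrow> strongly_connected V E S \<Longrightarrow> C \<subseteq> S \<Longrightarrow> S = C"
  unfolding conn_component_def by blast
lemma cc_intro: "strongly_connected V E C \<Longrightarrow> (\<And>S. strongly_connected V E S \<Longrightarrow> C \<subseteq> S \<Longrightarrow> S = C) \<Longrightarrow> conn_component V E C"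
  unfolding conn_component_def by blast

lemma comp_disj:
  assumes c1: "conn_component V E C1" and c2: "conn_component V E C2" and ne: "C1 \<inter> C2 \<noteq> {}"
  shows "C1 = C2"
proof -
  obtain z where z: "z \<in> C1" "z \<in> C2" using ne by auto
  have s1: "strongly_connected V E C1" using cc_sc[OF c1] .
  have s2: "strongly_connected V E C2" using cc_sc[OF c2] .
  have m1: "(E \<inter> C1 \<times> C1)\<^sup>+ \<subseteq> (E \<inter> (C1 \<union> C2) \<times> (C1 \<union> C2))\<^sup>+"
    by (rule tr_sub) blast
  have m2: "(E \<inter> C2 \<times> C2)\<^sup>+ \<subseteq> (E \<inter> (C1 \<union> C2) \<times> (C1 \<union> C2))\<^sup>+"
    by (rule tr_sub) blast
  have p: "(u, v) \<in> (E \<inter> (C1 \<union> C2) \<times> (C1 \<union> C2))\<^sup>+" if "u \<in> C1 \<union> C2" "v \<in> C1 \<union> C2" for u v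
  proof -
    have "(u, z) \<in> (E \<inter> (C1 \<union> C2) \<times> (C1 \<union> C2))\<^sup>+"
      using that(1) z sc_path[OF s1] sc_path[OF s2] m1 m2 by blast
    moreover have "(z, v) \<in> (E \<inter> (C1 \<union> C2) \<times> (C1 \<union> C2))\<^sup>+"
      using that(2) z sc_path[OF s1] sc_path[OF s2] m1 m2 by blast
    ultimately show ?thesis by (rule trancl_trans)
  qed
  have sc: "strongly_connected V E (C1 \<union> C2)"
    by (rule sc_intro) (use z sc_sub[OF s1] sc_sub[OF s2] p in blast)+
  have "C1 \<union> C2 = C1" by (rule cc_max[OF c1 sc]) blast
  moreover have "C1 \<union> C2 = C2" by (rule cc_max[OF c2 sc]) blast
  ultimately show ?thesis by metis
qed

lemma scc_component:
  assumes cyc: "(x0, x0) \<in> E\<^sup>+" and EV: "E \<subseteq> V \<times> V"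
  defines "C \<equiv> {b. (x0, b) \<in> E\<^sup>* \<and> (b, x0) \<in> E\<^sup>*}"
  shows "conn_component V E C"
proof -
  have inner: "(x0, x) \<in> E\<^sup>* \<longrightarrow> (y, x0) \<in> E\<^sup>* \<longrightarrow> (x, y) \<in> (E \<inter> C \<times> C)\<^sup>+"
    if "(x, y) \<in> E\<^sup>+" for x y
    using that
  proof (induction rule: trancl_induct)
    case (base y)
    show ?case
    proof (intro impI)
      assume a: "(x0, x) \<in> E\<^sup>*" "(y, x0) \<in> E\<^sup>*"
      have "(x, x0) \<in> E\<^sup>*" by (rule converse_rtrancl_into_rtrancl[OF base a(2)])
      then have xC: "x \<in> C" unfolding C_def using a(1) by blast
      have "(x0, y) \<in> E\<^sup>*" by (rule rtrancl_into_rtrancl[OF a(1) base])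
      then have yC: "y \<in> C" unfolding C_def using a(2) by blast
      have "(x, y) \<in> E \<inter> C \<times> C" using base xC yC by blast
      then show "(x, y) \<in> (E \<inter> C \<times> C)\<^sup>+" by (rule r_into_trancl)
    qed
  next
    case (step y z)
    show ?case
    proof (intro impI)
      assume a: "(x0, x) \<in> E\<^sup>*" "(z, x0) \<in> E\<^sup>*"
      have yx: "(y, x0) \<in> E\<^sup>*" by (rule converse_rtrancl_into_rtrancl[OF step(2) a(2)])
      have ih: "(x, y) \<in> (E \<inter> C \<times> C)\<^sup>+" using step.IH a(1) yx by blast
      have x0y: "(x0, y) \<in> E\<^sup>*" by (rule rtrancl_trans[OF a(1) trancl_into_rtrancl[OF step(1)]])
      then have yC: "y \<in> C" unfolding C_def using yx by blast
      have "(x0, z) \<in> E\<^sup>*" by (rule rtrancl_into_rtrancl[OF x0y step(2)])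
      then have zC: "z \<in> C" unfolding C_def using a(2) by blast
      have "(y, z) \<in> E \<inter> C \<times> C" using step(2) yC zC by blast
      then show "(x, z) \<in> (E \<inter> C \<times> C)\<^sup>+" by (rule trancl_into_trancl[OF ih])
    qed
  qed
  have Cmem: "b \<in> C \<longleftrightarrow> (x0, b) \<in> E\<^sup>* \<and> (b, x0) \<in> E\<^sup>*" for b
    unfolding C_def by simp
  have x0C: "x0 \<in> C" using Cmem by blast
  have tV: "E\<^sup>+ \<subseteq> V \<times> V" by (rule trancl_subset_Sigma[OF EV])
  have CV: "C \<subseteq> V"
  proof
    fix b assume "b \<in> C"
    then have "(x0, b) \<in> E\<^sup>*" using Cmem by blast
    then have "(x0, b) \<in> E\<^sup>+" by (rule trancl_rtrancl_trancl[OF cyc])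
    then show "b \<in> V" using tV by blast
  qed
  have sc: "strongly_connected V E C"
  proof (rule sc_intro)
    show "C \<noteq> {}" using x0C by blast
    show "C \<subseteq> V" by (rule CV)
    fix u v assume uv: "u \<in> C" "v \<in> C"
    have r: "(u, x0) \<in> E\<^sup>*" "(x0, v) \<in> E\<^sup>*" "(x0, u) \<in> E\<^sup>*" "(v, x0) \<in> E\<^sup>*"
      using uv Cmem by blast+
    have "(x0, v) \<in> E\<^sup>+" by (rule trancl_rtrancl_trancl[OF cyc r(2)])
    then have "(u, v) \<in> E\<^sup>+" by (rule rtrancl_trancl_trancl[OF r(1)])
    then show "(u, v) \<in> (E \<inter> C \<times> C)\<^sup>+" using inner r(3,4) by blast
  qed
  show ?thesis
  proof (rule cc_intro[OF sc])
    fix S assume S: "strongly_connected V E S" "C \<subseteq> S"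
    show "S = C"
    proof
      show "S \<subseteq> C"
      proof
        fix z assume z: "z \<in> S"
        have x0S: "x0 \<in> S" using x0C S(2) by blast
        have m: "(E \<inter> S \<times> S)\<^sup>+ \<subseteq> E\<^sup>+" by (rule tr_sub) blast
        have "(x0, z) \<in> E\<^sup>+" using sc_path[OF S(1) x0S z] m by blast
        moreover have "(z, x0) \<in> E\<^sup>+" using sc_path[OF S(1) z x0S] m by blast
        ultimately show "z \<in> C" unfolding Cmem by (intro conjI trancl_into_rtrancl)
      qed
      show "C \<subseteq> S" by (rule S(2))
    qed
  qed
qed

context cg
begin

lemma EL_V: "EL \<subseteq> VL \<times> VL" unfolding EL_def by auto

lemma path_height:
  assumes "(x, y) \<in> (EL \<inter> C \<times> C)\<^sup>+"
  shows "(\<exists>z\<in>C. HL z = 0) \<or> HL y \<ge> Suc (HL x)"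
  using assms
proof (induction rule: trancl_induct)
  case (base y)
  then show ?case using EH[of x y] by auto
next
  case (step y z)
  then show ?case using EH[of y z] by auto
qed

lemma comp_zero:
  assumes "conn_component VL EL C"
  shows "\<exists>\<alpha>\<in>C. HL \<alpha> = 0"
proof -
  have sc: "strongly_connected VL EL C" using assms by (rule cc_sc)
  then obtain \<alpha> where "\<alpha> \<in> C" using sc_ne by blast
  then have "(\<alpha>, \<alpha>) \<in> (EL \<inter> C \<times> C)\<^sup>+" using sc_path[OF sc] by blast
  then show ?thesis using path_height by fastforce
qed

definition ZL where "ZL = (\<lambda>A. clsL [A]) ` P"

lemma ZL_fin: "finite ZL" "card ZL \<le> card P"
  unfolding ZL_def using finP by (auto intro: card_image_le)

lemma zero_in_ZL: "\<alpha> \<in> VL \<Longrightarrow> HL \<alpha> = 0 \<Longrightarrow> \<alpha> \<in> ZL"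
  using H0 unfolding ZL_def by auto

lemma comp_count:
  "finite {C. conn_component VL EL C} \<and> card {C. conn_component VL EL C} \<le> card P"
proof -
  let ?K = "{C. conn_component VL EL C}"
  define f where "f C = (SOME \<alpha>. \<alpha> \<in> C \<and> HL \<alpha> = 0)" for C
  have fC: "f C \<in> C \<and> HL (f C) = 0" if "C \<in> ?K" for C
    unfolding f_def using comp_zero that by (metis (mono_tags, lifting) mem_Collect_eq someI_ex)
  have CV: "C \<subseteq> VL" if "C \<in> ?K" for C
    using that cc_sc sc_sub by blast
  have inj: "inj_on f ?K"
  proof (rule inj_onI)
    fix C1 C2 assume "C1 \<in> ?K" "C2 \<in> ?K" "f C1 = f C2"
    then show "C1 = C2" using comp_disj fC by (metis (no_types, lifting) disjoint_iff mem_Collect_eq)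
  qed
  have sub: "f ` ?K \<subseteq> ZL" using fC CV zero_in_ZL by blast
  have "finite (f ` ?K)" using sub ZL_fin finite_subset by blast
  then have fin: "finite ?K" using inj finite_imageD by blast
  have "card ?K = card (f ` ?K)" using inj card_image by fastforce
  also have "\<dots> \<le> card ZL" using sub ZL_fin card_mono by blast
  finally show ?thesis using fin ZL_fin by simp
qed

definition IL where
  "IL = {a. inf_path VL EL a \<and> HL (a 0) = 0 \<and> (\<forall>n\<ge>1. HL (a n) > 0)}"

lemma IL_height: "a \<in> IL \<Longrightarrow> HL (a n) = n"
proof (induction n)
  case 0 then show ?case unfolding IL_def by auto
next
  case (Suc n)
  then have "(a n, a (Suc n)) \<in> EL" "HL (a (Suc n)) > 0" unfolding IL_def inf_path_def by auto
  then show ?case using EH Suc by fastforce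
qed

lemma IL_unique:
  assumes a: "a \<in> IL" and b: "b \<in> IL" and ab: "a 0 = b 0"
  shows "a = b"
proof
  fix n show "a n = b n"
  proof (induction n)
    case 0 then show ?case using ab .
  next
    case (Suc n)
    have "(a n, a (Suc n)) \<in> EL" "(b n, b (Suc n)) \<in> EL" "HL (a (Suc n)) > 0" "HL (b (Suc n)) > 0"
      using a b unfolding IL_def inf_path_def by auto
    then show ?case using EU Suc by metis
  qed
qed

lemma IL_count: "finite IL \<and> card IL \<le> card P"
proof -
  have inj: "inj_on (\<lambda>a. a 0) IL" using IL_unique by (meson inj_onI)
  have sub: "(\<lambda>a. a 0) ` IL \<subseteq> ZL"
    using zero_in_ZL unfolding IL_def inf_path_def by auto
  have "finite ((\<lambda>a. a 0) ` IL)" using sub ZL_fin finite_subset by blast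
  then have fin: "finite IL" using inj finite_imageD by blast
  have "card IL = card ((\<lambda>a. a 0) ` IL)" using inj card_image by fastforce
  also have "\<dots> \<le> card ZL" using sub ZL_fin card_mono by blast
  finally show ?thesis using fin ZL_fin by simp
qed

lemma path_trancl:
  assumes "inf_path VL EL a" "i < j"
  shows "(a i, a j) \<in> EL\<^sup>+"
  using assms(2)
proof (induction j)
  case 0 then show ?case by simp
next
  case (Suc j)
  have e: "(a j, a (Suc j)) \<in> EL" using assms(1) unfolding inf_path_def by auto
  show ?case
  proof (cases "i = j")
    case True then show ?thesis using e by auto
  next
    case False then show ?thesis using Suc e by (meson less_SucE trancl.trancl_into_trancl)
  qed
qed

lemma path_class:
  assumes a: "inf_path VL EL a"
  shows "(\<exists>C. conn_component VL EL C \<and> (\<exists>N. \<forall>n\<ge>N. a n \<in> C)) \<or>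
         (\<exists>b\<in>IL. \<exists>N M. \<forall>n. a (N + n) = b (M + n))"
proof (cases "finite {n. HL (a n) = 0}")
  case False
  let ?Z = "{n. HL (a n) = 0}"
  have "a ` ?Z \<subseteq> ZL" using a zero_in_ZL unfolding inf_path_def by auto
  then have "finite (a ` ?Z)" using ZL_fin finite_subset by blast
  then obtain n0 where n0: "n0 \<in> ?Z" "infinite {n \<in> ?Z. a n = a n0}"
    using pigeonhole_infinite[OF False] by blast
  have later: "\<exists>j>m. a j = a n0" for m
    using n0(2) unfolding infinite_nat_iff_unbounded by auto
  obtain j0 where j0: "j0 > n0" "a j0 = a n0" using later by blast
  have cyc: "(a n0, a n0) \<in> EL\<^sup>+" using path_trancl[OF a j0(1)] j0 by simp
  define C where "C = {b. (a n0, b) \<in> EL\<^sup>* \<and> (b, a n0) \<in> EL\<^sup>*}"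
  have cc: "conn_component VL EL C" unfolding C_def by (rule scc_component[OF cyc EL_V])
  have "a n \<in> C" if "n \<ge> n0" for n
  proof -
    have "(a n0, a n) \<in> EL\<^sup>*"
      using that path_trancl[OF a, of n0 n] by (cases "n = n0") auto
    moreover obtain j where "j > n" "a j = a n0" using later by blast
    then have "(a n, a n0) \<in> EL\<^sup>*" using path_trancl[OF a, of n j] by auto
    ultimately show ?thesis unfolding C_def by auto
  qed
  then show ?thesis using cc by blast
next
  case True
  let ?Z = "{n. HL (a n) = 0}"
  show ?thesis
  proof (cases "?Z = {}")
    case False
    define N where "N = Max ?Z"
    have NZ: "N \<in> ?Z" using True False unfolding N_def by (rule Max_in)
    have gt: "n > N \<Longrightarrow> HL (a n) > 0" for n using Max_ge[OF True, of n] unfolding N_def by fastforce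
    define b where "b n = a (N + n)" for n
    have "b \<in> IL" unfolding IL_def b_def using a NZ gt unfolding inf_path_def by auto
    moreover have "\<forall>n. a (N + n) = b (0 + n)" unfolding b_def by simp
    ultimately show ?thesis by blast
  next
    case emp: True
    have pos: "HL (a n) > 0" for n using emp by auto
    obtain w where w: "w \<in> words P" "cy w \<noteq> {}" "a 0 = clsL w"
      using a unfolding inf_path_def VL_def by blast
    define s where "s = G w"
    have s: "s \<in> words P" "G s = s" "cy s \<noteq> {}"
      unfolding s_def using G_words[OF w(1)] G_G[OF w(1)] cy_G[OF w(1)] w by auto
    define k where "k = length s - 1"
    have hk: "HL (a 0) = k" unfolding k_def s_def using HL_clsL w by simp
    have k1: "k \<ge> 1" using pos[of 0] hk by simp
    have ls: "length s = Suc k" using k1 unfolding k_def by simp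
    have a0: "a 0 = clsL s" using w clsL_G unfolding s_def by simp
    define b where "b n = (if n < k then clsL (take (Suc n) s) else a (n - k))" for n
    have pr: "take j s \<in> words P \<and> G (take j s) = take j s \<and> cy (take j s) \<noteq> {}"
      if "1 \<le> j" "j \<le> Suc k" for j using prefix_red[OF s] that ls by simp
    have bV: "clsL (take j s) \<in> VL" if "1 \<le> j" "j \<le> Suc k" for j
      using pr[OF that] unfolding VL_def by blast
    have bH: "HL (clsL (take j s)) = j - 1" if "1 \<le> j" "j \<le> Suc k" for j
      using pr[OF that] HL_clsL[of "take j s"] that ls by simp
    have ip: "inf_path VL EL b"
      unfolding inf_path_def
    proof
      fix n
      show "b n \<in> VL \<and> (b n, b (Suc n)) \<in> EL"
      proof (cases "n < k")
        case True
        have bn: "b n = clsL (take (Suc n) s)" unfolding b_def using True by simp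
        have bs: "b (Suc n) = clsL (take (Suc (Suc n)) s)"
        proof (cases "Suc n < k")
          case True then show ?thesis unfolding b_def by simp
        next
          case False
          then have "Suc n = k" using \<open>n < k\<close> by simp
          then show ?thesis unfolding b_def using a0 ls by simp
        qed
        have t: "take (Suc (Suc n)) s = take (Suc n) s @ [s ! Suc n]"
          using True ls by (simp add: take_Suc_conv_app_nth)
        have "Suc n < length s" using True ls by simp
        then have "s ! Suc n \<in> set s" by (rule nth_mem)
        then have sP: "s ! Suc n \<in> P" using s(1) by (auto simp: words_def)
        have v1: "b n \<in> VL" using bn bV[of "Suc n"] True by simp
        have v2: "b (Suc n) \<in> VL" using bs bV[of "Suc (Suc n)"] True by simp
        have "(b n, b (Suc n)) \<in> EL"
          unfolding EL_def using v1 v2 bn bs t sP pr[of "Suc n"] True by auto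
        then show ?thesis using v1 by simp
      next
        case False
        then have "b n = a (n - k)" "b (Suc n) = a (Suc (n - k))" unfolding b_def by (auto simp: Suc_diff_le)
        then show ?thesis using a unfolding inf_path_def by simp
      qed
    qed
    have "b \<in> IL"
      unfolding IL_def
    proof (intro CollectI conjI allI impI)
      show "inf_path VL EL b" by (rule ip)
      show "HL (b 0) = 0" unfolding b_def using k1 bH[of 1] by simp
      fix n :: nat assume n: "n \<ge> 1"
      show "HL (b n) > 0"
      proof (cases "n < k")
        case True then show ?thesis unfolding b_def using bH[of "Suc n"] n by simp
      next
        case False then show ?thesis unfolding b_def using pos by simp
      qed
    qed
    moreover have "\<forall>n. a (0 + n) = b (k + n)" unfolding b_def by simp
    ultimately show ?thesis by blast
  qed
qed

end


context sett
begin

lemma BP_fin: "finite P"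
  by (rule conjunct1[OF BP[unfolded basic_partition_def]])

lemma BP_disj: "A \<in> P \<Longrightarrow> B \<in> P \<Longrightarrow> A \<noteq> B \<Longrightarrow> A \<inter> B = {}"
  using conjunct1[OF conjunct2[OF BP[unfolded basic_partition_def]]] by blast

lemma BP_A:
  assumes "A \<in> P"
  shows "lb A \<in> branches h F \<and>
        (\<exists>B\<in>branches h F. \<exists>g a b. branch_param (TR h F) B g \<and> 0 \<le> a \<and> a \<le> b \<and> b \<le> 1 \<and>
             A = g ` {a..b} \<and>
             F (g a) = tr \<tau> (p A) (THE z. z \<in> lb A \<inter> TR h F)) \<and>
        F ` A \<subseteq> tr \<tau> (p A) ` (lb A) \<union> interior (TR h F)"
  using bspec[OF conjunct1[OF conjunct2[OF conjunct2[OF BP[unfolded basic_partition_def]]]] assms] .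

definition witP :: "'a set \<Rightarrow> 'a set \<times> (real \<Rightarrow> 'a) \<times> real \<times> real \<Rightarrow> bool" where
  "witP A x \<longleftrightarrow> (case x of (B, g, a, b) \<Rightarrow> B \<in> branches h F \<and> branch_param (TR h F) B g \<and>
      0 \<le> a \<and> a \<le> b \<and> b \<le> 1 \<and> A = g ` {a..b} \<and> F (g a) = tr \<tau> (p A) (THE z. z \<in> lb A \<inter> TR h F))"

definition wit where "wit A = (SOME x. witP A x)"
definition wB where "wB A = fst (wit A)"
definition wg where "wg A = fst (snd (wit A))"
definition wa where "wa A = fst (snd (snd (wit A)))"
definition wb where "wb A = snd (snd (snd (wit A)))"

lemma W:
  assumes "A \<in> P"
  shows "wB A \<in> branches h F \<and> branch_param (TR h F) (wB A) (wg A) \<and> 0 \<le> wa A \<and> wa A \<le> wb A \<and>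
    wb A \<le> 1 \<and> A = wg A ` {wa A..wb A} \<and> F (wg A (wa A)) = tr \<tau> (p A) (THE z. z \<in> lb A \<inter> TR h F)"
proof -
  obtain B g a b where "B \<in> branches h F" "branch_param (TR h F) B g" "0 \<le> a" "a \<le> b" "b \<le> 1"
    "A = g ` {a..b}" "F (g a) = tr \<tau> (p A) (THE z. z \<in> lb A \<inter> TR h F)"
    using BP_A[OF assms] by blast
  then have "witP A (B, g, a, b)" unfolding witP_def by simp
  then have "witP A (wit A)" unfolding wit_def by (rule someI)
  moreover obtain B' g' a' b' where e: "wit A = (B', g', a', b')" by (cases "wit A") auto
  ultimately show ?thesis unfolding wB_def wg_def wa_def wb_def witP_def by simp
qed

lemma bp_hom: "branch_param T B g \<Longrightarrow> \<exists>g'. homeomorphism {0..1} B g g'"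
  unfolding branch_param_def by blast

lemma bp_TR: "branch_param T B g \<Longrightarrow> B \<inter> T = {g 0}"
  unfolding branch_param_def by blast

lemma bp_img: "branch_param T B g \<Longrightarrow> g ` {0..1} = B"
  using bp_hom unfolding homeomorphism_def by blast

lemma bp_cont: "branch_param T B g \<Longrightarrow> continuous_on {0..1} g"
  using bp_hom unfolding homeomorphism_def by blast

lemma P_sub_B: "A \<in> P \<Longrightarrow> A \<subseteq> wB A"
proof -
  assume A: "A \<in> P"
  have w: "branch_param (TR h F) (wB A) (wg A)" "0 \<le> wa A" "wb A \<le> 1" "A = wg A ` {wa A..wb A}"
    using W[OF A] by blast+
  have "{wa A..wb A} \<subseteq> {0..1}" using w by auto
  then have "A \<subseteq> wg A ` {0..1}" using w(4) by blast
  then show ?thesis using bp_img[OF w(1)] by simp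
qed

lemma P_X: "A \<in> P \<Longrightarrow> A \<subseteq> Xset h F"
  using P_sub_B branches_X W by blast

lemma lb_X: "A \<in> P \<Longrightarrow> lb A \<subseteq> Xset h F"
  using BP_A branches_X by blast

lemma A_conn: "A \<in> P \<Longrightarrow> connected A \<and> wg A (wa A) \<in> A"
proof -
  assume A: "A \<in> P"
  have w: "branch_param (TR h F) (wB A) (wg A)" "0 \<le> wa A" "wa A \<le> wb A" "wb A \<le> 1" "A = wg A ` {wa A..wb A}"
    using W[OF A] by blast+
  have "continuous_on {wa A..wb A} (wg A)"
    by (rule continuous_on_subset[OF bp_cont[OF w(1)]]) (use w in auto)
  then have "connected (wg A ` {wa A..wb A})" by (rule connected_continuous_image) simp
  moreover have "wg A (wa A) \<in> wg A ` {wa A..wb A}" using w(3) by simp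
  ultimately show ?thesis by (simp only: w(5)[symmetric])
qed

lemma plusZ_mem: "x \<in> plusZ \<tau> A \<longleftrightarrow> (\<exists>m a. a \<in> A \<and> x = tr \<tau> m a)"
  unfolding plusZ_def by blast

lemma plusZ_sub: "A \<subseteq> plusZ \<tau> A"
proof
  fix a assume "a \<in> A" then show "a \<in> plusZ \<tau> A" unfolding plusZ_mem using tr_0[of a, symmetric] by blast
qed

lemma plusZ_X: assumes "A \<subseteq> Xset h F" shows "plusZ \<tau> A \<inter> Xset h F = A"
proof
  show "plusZ \<tau> A \<inter> Xset h F \<subseteq> A"
  proof
    fix x assume x: "x \<in> plusZ \<tau> A \<inter> Xset h F"
    then have "x \<in> plusZ \<tau> A" by blast
    then obtain m a where ma: "a \<in> A" "x = tr \<tau> m a" unfolding plusZ_mem by blast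
    then have "m = 0" using X_tr[of a m] assms x by blast
    then show "x \<in> A" using ma tr_0 by simp
  qed
  show "A \<subseteq> plusZ \<tau> A \<inter> Xset h F" using plusZ_sub assms by blast
qed

lemma plusZ_tr: "x \<in> plusZ \<tau> A \<Longrightarrow> tr \<tau> m x \<in> plusZ \<tau> A"
proof -
  assume "x \<in> plusZ \<tau> A"
  then obtain k a where "a \<in> A" "x = tr \<tau> k a" unfolding plusZ_mem by blast
  then have "tr \<tau> m x = tr \<tau> (m + k) a" using tr_add by simp
  then show ?thesis using \<open>a \<in> A\<close> unfolding plusZ_mem by blast
qed

lemma F_plusZ: "F ` plusZ \<tau> A = plusZ \<tau> (F ` A)"
proof
  show "F ` plusZ \<tau> A \<subseteq> plusZ \<tau> (F ` A)"
  proof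
    fix y assume "y \<in> F ` plusZ \<tau> A"
    then obtain z where z: "z \<in> plusZ \<tau> A" "y = F z" by blast
    then obtain m a where "a \<in> A" "y = F (tr \<tau> m a)" unfolding plusZ_mem by blast
    then have "y = tr \<tau> m (F a)" "F a \<in> F ` A" using tr_F by auto
    then show "y \<in> plusZ \<tau> (F ` A)" unfolding plusZ_mem by blast
  qed
  show "plusZ \<tau> (F ` A) \<subseteq> F ` plusZ \<tau> A"
  proof
    fix y assume "y \<in> plusZ \<tau> (F ` A)"
    then obtain m a where "a \<in> A" "y = tr \<tau> m (F a)" unfolding plusZ_mem by blast
    then have "y = F (tr \<tau> m a)" "tr \<tau> m a \<in> plusZ \<tau> A" using tr_F unfolding plusZ_mem by auto
    then show "y \<in> F ` plusZ \<tau> A" by blast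
  qed
qed

lemma plusZ_mono: "A \<subseteq> B \<Longrightarrow> plusZ \<tau> A \<subseteq> plusZ \<tau> B"
  unfolding plusZ_def by blast

lemma plusZ_empty: "plusZ \<tau> {} = {}"
  unfolding plusZ_def by blast

definition Sw where "Sw w = {x. \<forall>i<length w. (F ^^ i) x \<in> plusZ \<tau> (w ! i)}"
definition cZ where "cZ w = (F ^^ (length w - 1)) ` Sw w"

lemma cyl_cZ: "cyl h \<tau> F w = cZ w \<inter> Xset h F"
  unfolding cyl_def cZ_def Sw_def by simp

lemma Sw_snoc: "Sw (w @ [A]) = Sw w \<inter> {x. (F ^^ length w) x \<in> plusZ \<tau> A}"
  unfolding Sw_def by (auto simp: nth_append less_Suc_eq)

lemma cZ_snoc:
  assumes "w \<noteq> []"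
  shows "cZ (w @ [A]) = F ` cZ w \<inter> plusZ \<tau> A"
proof -
  have l: "length w = Suc (length w - 1)" using assms by simp
  have "cZ (w @ [A]) = (F ^^ length w) ` (Sw w \<inter> {x. (F ^^ length w) x \<in> plusZ \<tau> A})"
    unfolding cZ_def Sw_snoc by simp
  also have "\<dots> = (F ^^ length w) ` Sw w \<inter> plusZ \<tau> A" by blast
  also have "(F ^^ length w) ` Sw w = F ` cZ w"
  proof -
    have "(F ^^ length w) = F \<circ> (F ^^ (length w - 1))" by (subst l) simp
    then show ?thesis unfolding cZ_def by (simp add: image_comp)
  qed
  finally show ?thesis .
qed

lemma cZ_inv: "x \<in> cZ w \<Longrightarrow> tr \<tau> m x \<in> cZ w"
proof -
  assume "x \<in> cZ w"
  then obtain y where y: "y \<in> Sw w" "x = (F ^^ (length w - 1)) y" unfolding cZ_def by blast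
  have "tr \<tau> m y \<in> Sw w"
    using y(1) unfolding Sw_def by (auto simp: tr_Fn intro: plusZ_tr)
  moreover have "tr \<tau> m x = (F ^^ (length w - 1)) (tr \<tau> m y)" using y(2) tr_Fn by simp
  ultimately show ?thesis unfolding cZ_def by blast
qed

lemma cZ_last: assumes "w \<noteq> []" shows "cZ w \<subseteq> plusZ \<tau> (last w)"
proof
  fix x assume "x \<in> cZ w"
  then obtain y where y: "y \<in> Sw w" "x = (F ^^ (length w - 1)) y" unfolding cZ_def by blast
  have "length w - 1 < length w" using assms by simp
  then have "(F ^^ (length w - 1)) y \<in> plusZ \<tau> (w ! (length w - 1))" using y(1) unfolding Sw_def by blast
  then show "x \<in> plusZ \<tau> (last w)" using y(2) assms by (simp add: last_conv_nth)
qed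

lemma cZ_eq:
  assumes "w \<noteq> []" "last w \<subseteq> Xset h F"
  shows "cZ w = plusZ \<tau> (cZ w \<inter> Xset h F)"
proof
  show "cZ w \<subseteq> plusZ \<tau> (cZ w \<inter> Xset h F)"
  proof
    fix x assume x: "x \<in> cZ w"
    then have "x \<in> plusZ \<tau> (last w)" using cZ_last[OF assms(1)] by blast
    then obtain k a where ka: "a \<in> last w" "x = tr \<tau> k a" unfolding plusZ_mem by blast
    have "a = tr \<tau> (- k) x" using ka tr_inv1 by simp
    then have "a \<in> cZ w" using cZ_inv x by simp
    then show "x \<in> plusZ \<tau> (cZ w \<inter> Xset h F)" using ka assms(2) unfolding plusZ_mem by blast
  qed
  show "plusZ \<tau> (cZ w \<inter> Xset h F) \<subseteq> cZ w"
    unfolding plusZ_def using cZ_inv by blast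
qed

lemma cyl_snoc':
  assumes w: "w \<noteq> []" "set w \<subseteq> P" and A: "A \<in> P"
  shows "cyl h \<tau> F (w @ [A]) = plusZ \<tau> (F ` cyl h \<tau> F w) \<inter> A"
proof -
  have lw: "last w \<subseteq> Xset h F" using w P_X by (meson last_in_set subsetD)
  have "cyl h \<tau> F (w @ [A]) = F ` cZ w \<inter> plusZ \<tau> A \<inter> Xset h F"
    unfolding cyl_cZ cZ_snoc[OF w(1)] ..
  also have "F ` cZ w = plusZ \<tau> (F ` cyl h \<tau> F w)"
    unfolding cyl_cZ F_plusZ[symmetric] using cZ_eq[OF w(1) lw] by simp
  also have "plusZ \<tau> (F ` cyl h \<tau> F w) \<inter> plusZ \<tau> A \<inter> Xset h F = plusZ \<tau> (F ` cyl h \<tau> F w) \<inter> (plusZ \<tau> A \<inter> Xset h F)"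
    by blast
  also have "plusZ \<tau> A \<inter> Xset h F = A" using plusZ_X P_X A by blast
  finally show ?thesis .
qed

lemma cyl_single': assumes "A \<in> P" shows "cyl h \<tau> F [A] = A"
proof -
  have "Sw [A] = plusZ \<tau> A" unfolding Sw_def by auto
  then have "cZ [A] = plusZ \<tau> A" unfolding cZ_def by simp
  then show ?thesis unfolding cyl_cZ using plusZ_X P_X assms by blast
qed

lemma cyl_last': assumes "w \<noteq> []" "set w \<subseteq> P" shows "cyl h \<tau> F w \<subseteq> last w"
proof -
  have l: "last w \<in> P" using assms by (meson last_in_set subsetD)
  have "cyl h \<tau> F w \<subseteq> plusZ \<tau> (last w) \<inter> Xset h F" unfolding cyl_cZ using cZ_last[OF assms(1)] by blast
  then show ?thesis using plusZ_X[OF P_X[OF l]] by simp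
qed

end


context sett
begin

lemma SL': "finite (components (- TR h F \<inter> {x. retr h x \<in> h ` {0..<1}})) \<and>
       (\<forall>C\<in>components (- TR h F \<inter> {x. retr h x \<in> h ` {0..<1}}). \<forall>D\<in>components (- TR h F \<inter> {x. retr h x \<in> h ` {0..<1}}). C \<noteq> D \<longrightarrow> closure C \<inter> closure D = {}) \<and>
       (\<forall>C\<in>components (- TR h F \<inter> {x. retr h x \<in> h ` {0..<1}}). \<exists>g. branch_param (TR h F) (closure C) g)"
  using SL unfolding sun_like_def Let_def .

lemma br_disj:
  assumes "B1 \<in> branches h F" "B2 \<in> branches h F" "B1 \<noteq> B2"
  shows "B1 \<inter> B2 = {}"
proof -
  obtain D1 where D1: "D1 \<in> components (- TR h F \<inter> {x. retr h x \<in> h ` {0..<1}})" "B1 = closure D1"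
    using assms(1) unfolding branches_def by blast
  obtain D2 where D2: "D2 \<in> components (- TR h F \<inter> {x. retr h x \<in> h ` {0..<1}})" "B2 = closure D2"
    using assms(2) unfolding branches_def by blast
  have "D1 \<noteq> D2" using D1 D2 assms(3) by blast
  then show ?thesis using conjunct1[OF conjunct2[OF SL']] D1 D2 by blast
qed

lemma root_eq:
  assumes "branch_param (TR h F) B g"
  shows "(THE z. z \<in> B \<inter> TR h F) = g 0"
proof -
  have e: "B \<inter> TR h F = {g 0}" by (rule bp_TR[OF assms])
  show ?thesis unfolding e by simp
qed

definition Qs where "Qs An C = tr \<tau> (- p An) ` F ` C"

lemma closed_TR: "closed (TR h F)" unfolding TR_def by simp

lemma Q_props:
  assumes An: "An \<in> P" and C: "C \<subseteq> An" "connected C" "wg An (wa An) \<in> C"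
  shows "connected (Qs An C)" "Qs An C \<subseteq> lb An \<union> interior (TR h F)"
    "\<And>g. branch_param (TR h F) (lb An) g \<Longrightarrow> g 0 \<in> Qs An C"
    "\<And>A'. A' \<in> P \<Longrightarrow> plusZ \<tau> (F ` C) \<inter> A' = Qs An C \<inter> A'"
proof -
  let ?q = "p An"
  have FA: "F ` An \<subseteq> tr \<tau> ?q ` lb An \<union> interior (TR h F)" using BP_A[OF An] by blast
  have FC: "F ` C \<subseteq> tr \<tau> ?q ` lb An \<union> interior (TR h F)" using FA C(1) by blast
  have "connected (F ` C)"
    by (rule connected_continuous_image[OF continuous_on_subset[OF cont subset_UNIV] C(2)])
  then show "connected (Qs An C)" unfolding Qs_def
    by (rule connected_continuous_image[OF continuous_on_subset[OF tr_cont subset_UNIV]])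
  show "Qs An C \<subseteq> lb An \<union> interior (TR h F)"
  proof
    fix y assume "y \<in> Qs An C"
    then obtain c where c: "c \<in> C" "y = tr \<tau> (- ?q) (F c)" unfolding Qs_def by blast
    have "F c \<in> tr \<tau> ?q ` lb An \<union> interior (TR h F)" using FC c(1) by blast
    then show "y \<in> lb An \<union> interior (TR h F)"
    proof
      assume "F c \<in> tr \<tau> ?q ` lb An"
      then obtain l where "l \<in> lb An" "F c = tr \<tau> ?q l" by blast
      then show ?thesis using c(2) tr_inv1 by simp
    next
      assume "F c \<in> interior (TR h F)"
      then show ?thesis using c(2) int_tr by simp
    qed
  qed
  show "g 0 \<in> Qs An C" if g: "branch_param (TR h F) (lb An) g" for g
  proof -
    have "F (wg An (wa An)) = tr \<tau> ?q (g 0)" using W[OF An] root_eq[OF g] by simp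
    then have "tr \<tau> (- ?q) (F (wg An (wa An))) = g 0" using tr_inv1 by simp
    then show ?thesis using C(3) unfolding Qs_def by (metis image_eqI)
  qed
  show "plusZ \<tau> (F ` C) \<inter> A' = Qs An C \<inter> A'" if A': "A' \<in> P" for A'
  proof
    show "Qs An C \<inter> A' \<subseteq> plusZ \<tau> (F ` C) \<inter> A'"
      unfolding Qs_def plusZ_def by blast
    show "plusZ \<tau> (F ` C) \<inter> A' \<subseteq> Qs An C \<inter> A'"
    proof
      fix x assume x: "x \<in> plusZ \<tau> (F ` C) \<inter> A'"
      then have "x \<in> plusZ \<tau> (F ` C)" by blast
      then obtain m y where my: "y \<in> F ` C" "x = tr \<tau> m y" unfolding plusZ_mem by blast
      obtain c where c: "c \<in> C" "y = F c" using my(1) by blast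
      have xX: "x \<in> Xset h F" using x P_X[OF A'] by blast
      have "y \<in> tr \<tau> ?q ` lb An \<union> interior (TR h F)" using FC my(1) by blast
      then show "x \<in> Qs An C \<inter> A'"
      proof
        assume "y \<in> interior (TR h F)"
        then have "x \<in> interior (TR h F)" using my(2) int_tr by simp
        then show ?thesis using xX X_int by blast
      next
        assume "y \<in> tr \<tau> ?q ` lb An"
        then obtain l where l: "l \<in> lb An" "y = tr \<tau> ?q l" by blast
        have "x = tr \<tau> (m + ?q) l" using my(2) l(2) tr_add by simp
        moreover have "l \<in> Xset h F" using lb_X[OF An] l(1) by blast
        ultimately have "m + ?q = 0" using X_tr xX by blast
        then have "m = - ?q" by simp
        then show ?thesis using my(2) c x unfolding Qs_def by blast
      qed
    qed
  qed
qed

lemma Q_empty: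
  assumes An: "An \<in> P" and C: "C \<subseteq> An" "connected C" "wg An (wa An) \<in> C"
    and A': "A' \<in> P" "wB A' \<noteq> lb An"
  shows "Qs An C \<inter> A' = {}"
proof -
  have b1: "wB A' \<in> branches h F" using W[OF A'(1)] by blast
  have b2: "lb An \<in> branches h F" using BP_A[OF An] by blast
  have "wB A' \<inter> lb An = {}" by (rule br_disj[OF b1 b2 A'(2)])
  then have "Qs An C \<inter> A' \<subseteq> interior (TR h F) \<inter> Xset h F"
    using Q_props(2)[OF An C] P_sub_B[OF A'(1)] P_X[OF A'(1)] by blast
  then show ?thesis using X_int by blast
qed

lemma DC':
  assumes An: "An \<in> P" and C: "C \<subseteq> An" "connected C" "wg An (wa An) \<in> C"
    and g: "branch_param (TR h F) (lb An) g"
    and s: "0 \<le> s'" "s' \<le> s" "s \<le> 1" and gs: "g s \<in> Qs An C"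
  shows "g s' \<in> Qs An C"
proof -
  obtain g' where hom: "homeomorphism {0..1} (lb An) g g'" using bp_hom[OF g] by blast
  show ?thesis
    by (rule DC[OF closed_TR hom bp_TR[OF g] Q_props(1)[OF An C] Q_props(2)[OF An C]
          Q_props(3)[OF An C g] s gs])
qed

lemma TOP:
  assumes An: "An \<in> P" and C: "C \<subseteq> An" "connected C" "wg An (wa An) \<in> C" and A': "A' \<in> P"
  shows "Qs An C \<inter> A' = {} \<or> (connected (Qs An C \<inter> A') \<and> wg A' (wa A') \<in> Qs An C \<inter> A')"
proof (cases "wB A' = lb An")
  case False then show ?thesis using Q_empty[OF An C A'] by blast
next
  case True
  obtain G a b where Gab: "G = wg A'" "a = wa A'" "b = wb A'" by blast
  let ?g = G and ?a = a and ?b = b and ?Q = "Qs An C"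
  have w: "branch_param (TR h F) (wB A') ?g" "0 \<le> ?a" "?a \<le> ?b" "?b \<le> 1" "A' = ?g ` {?a..?b}"
    using W[OF A'] unfolding Gab by blast+
  have g: "branch_param (TR h F) (lb An) ?g" using w(1) True by simp
  define D where "D = {u \<in> {?a..?b}. ?g u \<in> ?Q}"
  have QA: "?Q \<inter> A' = ?g ` D"
  proof -
    have "?Q \<inter> ?g ` {?a..?b} = ?g ` D" unfolding D_def by blast
    then show ?thesis using w(5) by simp
  qed
  show ?thesis
  proof (cases "?g ?a \<in> ?Q")
    case False
    have "D = {}"
    proof (rule ccontr)
      assume "D \<noteq> {}"
      then obtain u where u: "u \<in> {?a..?b}" "?g u \<in> ?Q" unfolding D_def by blast
      have "?g ?a \<in> ?Q" by (rule DC'[OF An C g w(2) _ _ u(2)]) (use u w in auto)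
      then show False using False by simp
    qed
    then show ?thesis using QA by simp
  next
    case True
    have "is_interval D"
      unfolding is_interval_1
    proof (intro ballI allI impI)
      fix x y z assume xy: "x \<in> D" "y \<in> D" "x \<le> z \<and> z \<le> y"
      have z: "z \<in> {?a..?b}" using xy unfolding D_def by auto
      have "?g z \<in> ?Q" by (rule DC'[OF An C g, where s'=z and s=y]) (use xy z w in \<open>auto simp: D_def\<close>)
      then show "z \<in> D" using z unfolding D_def by blast
    qed
    then have "connected D" by (simp add: is_interval_connected_1)
    moreover have "continuous_on D ?g"
      by (rule continuous_on_subset[OF bp_cont[OF w(1)]]) (use w in \<open>auto simp: D_def\<close>)
    ultimately have "connected (?g ` D)" using connected_continuous_image by blast
    moreover have "?g ?a \<in> ?g ` D" using True w(3) unfolding D_def by auto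
    ultimately show ?thesis using QA Gab by simp
  qed
qed

lemma UNIQ:
  assumes An: "An \<in> P" and C: "C \<subseteq> An" "connected C" "wg An (wa An) \<in> C"
    and A1: "A1 \<in> P" "Qs An C \<inter> A1 \<noteq> {}" "Qs An C \<inter> A1 \<noteq> A1"
    and A2: "A2 \<in> P" "Qs An C \<inter> A2 \<noteq> {}" "Qs An C \<inter> A2 \<noteq> A2"
  shows "A1 = A2"
proof (rule ccontr)
  assume ne: "A1 \<noteq> A2"
  let ?Q = "Qs An C"
  have b1: "wB A1 = lb An" using Q_empty[OF An C A1(1)] A1(2) by blast
  have b2: "wB A2 = lb An" using Q_empty[OF An C A2(1)] A2(2) by blast
  obtain G a b where Gab: "G = wg A1" "a = wa A1" "b = wb A1" by blast
  let ?g = G and ?a = a and ?b = b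
  have w: "branch_param (TR h F) (wB A1) ?g" "0 \<le> ?a" "?a \<le> ?b" "?b \<le> 1" "A1 = ?g ` {?a..?b}"
    using W[OF A1(1)] unfolding Gab by blast+
  have g: "branch_param (TR h F) (lb An) ?g" using w(1) b1 by simp
  obtain g' where hom: "homeomorphism {0..1} (lb An) ?g g'" using bp_hom[OF g] by blast
  have hd: "\<And>u. u \<in> {0..1} \<Longrightarrow> g' (?g u) = u" "\<And>y. y \<in> lb An \<Longrightarrow> ?g (g' y) = y"
    "g' ` lb An = {0..1}" "continuous_on (lb An) g'"
    using hom unfolding homeomorphism_def by auto
  have A2L: "A2 \<subseteq> lb An" using P_sub_B[OF A2(1)] b2 by simp
  define J2 where "J2 = g' ` A2"
  have "connected A2" using A_conn[OF A2(1)] by blast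
  then have "connected J2" unfolding J2_def
    by (rule connected_continuous_image[OF continuous_on_subset[OF hd(4) A2L]])
  then have iJ2: "is_interval J2" by (simp add: is_interval_connected_1)
  have J201: "J2 \<subseteq> {0..1}" unfolding J2_def using hd(3) A2L by blast
  have A2J: "A2 = ?g ` J2"
  proof
    show "A2 \<subseteq> ?g ` J2"
    proof
      fix y assume "y \<in> A2"
      then have "y = ?g (g' y)" using hd(2) A2L by auto
      then show "y \<in> ?g ` J2" unfolding J2_def using \<open>y \<in> A2\<close> by blast
    qed
    show "?g ` J2 \<subseteq> A2" unfolding J2_def using hd(2) A2L by auto
  qed
  have dc: "?g y \<in> ?Q" if "0 \<le> y" "y \<le> x" "x \<le> 1" "?g x \<in> ?Q" for x y
    by (rule DC'[OF An C g that])
  have lt: "x < y" if "x \<in> {0..1}" "y \<in> {0..1}" "?g x \<in> ?Q" "?g y \<notin> ?Q" for x y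
  proof (rule ccontr)
    assume "\<not> x < y"
    then have "?g y \<in> ?Q" using dc[of y x] that by auto
    then show False using that by simp
  qed
  obtain x1 where x1: "x1 \<in> {?a..?b}" "?g x1 \<in> ?Q"
  proof -
    obtain y where "y \<in> ?Q" "y \<in> ?g ` {?a..?b}" using A1(2) w(5) by blast
    then show ?thesis using that by blast
  qed
  obtain y1 where y1: "y1 \<in> {?a..?b}" "?g y1 \<notin> ?Q"
  proof -
    obtain y where "y \<notin> ?Q" "y \<in> ?g ` {?a..?b}" using A1(3) w(5) by blast
    then show ?thesis using that by blast
  qed
  obtain x2 where x2: "x2 \<in> J2" "?g x2 \<in> ?Q"
  proof -
    obtain y where "y \<in> ?Q" "y \<in> ?g ` J2" using A2(2) A2J by blast
    then show ?thesis using that by blast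
  qed
  obtain y2 where y2: "y2 \<in> J2" "?g y2 \<notin> ?Q"
  proof -
    obtain y where "y \<notin> ?Q" "y \<in> ?g ` J2" using A2(3) A2J by blast
    then show ?thesis using that by blast
  qed
  have I1: "{?a..?b} \<subseteq> {0..1}" using w by auto
  have m: "x1 \<in> {0..1}" "y1 \<in> {0..1}" "x2 \<in> {0..1}" "y2 \<in> {0..1}"
    using subsetD[OF I1 x1(1)] subsetD[OF I1 y1(1)] subsetD[OF J201 x2(1)] subsetD[OF J201 y2(1)] by auto
  have "x1 < y1" "x2 < y1" "x1 < y2" "x2 < y2"
    using lt[OF m(1) m(2) x1(2) y1(2)] lt[OF m(3) m(2) x2(2) y1(2)]
      lt[OF m(1) m(4) x1(2) y2(2)] lt[OF m(3) m(4) x2(2) y2(2)] by auto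
  define z where "z = max x1 x2"
  have "z \<in> {?a..?b}" using x1 y1 \<open>x2 < y1\<close> unfolding z_def by auto
  moreover have "z \<in> J2"
  proof -
    have "x2 \<le> z" "z \<le> y2" using \<open>x1 < y2\<close> \<open>x2 < y2\<close> unfolding z_def by auto
    then show ?thesis using iJ2 x2(1) y2(1) unfolding is_interval_1 by blast
  qed
  ultimately have "?g z \<in> A1 \<inter> A2" using w(5) A2J by blast
  then show False using BP_disj[OF A1(1) A2(1) ne] by blast
qed

lemma INV:
  "w \<in> words P \<Longrightarrow> cyl h \<tau> F w \<noteq> {} \<Longrightarrow>
     connected (cyl h \<tau> F w) \<and> wg (last w) (wa (last w)) \<in> cyl h \<tau> F w"
proof (induction w rule: rev_induct)
  case Nil then show ?case by (simp add: words_def)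
next
  case (snoc A w)
  have A: "A \<in> P" and sw: "set w \<subseteq> P" using snoc.prems by (auto simp: words_def)
  show ?case
  proof (cases "w = []")
    case True
    then show ?thesis using cyl_single'[OF A] A_conn[OF A] by simp
  next
    case False
    have e: "cyl h \<tau> F (w @ [A]) = plusZ \<tau> (F ` cyl h \<tau> F w) \<inter> A" by (rule cyl_snoc'[OF False sw A])
    have ne: "cyl h \<tau> F w \<noteq> {}"
    proof
      assume "cyl h \<tau> F w = {}"
      then have "cyl h \<tau> F (w @ [A]) = {}" using e plusZ_empty by simp
      then show False using snoc.prems by simp
    qed
    have ww: "w \<in> words P" using False sw by (simp add: words_def)
    have IH: "connected (cyl h \<tau> F w)" "wg (last w) (wa (last w)) \<in> cyl h \<tau> F w"
      using snoc.IH[OF ww ne] by blast+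
    have lP: "last w \<in> P" using False sw by (meson last_in_set subsetD)
    have sub: "cyl h \<tau> F w \<subseteq> last w" by (rule cyl_last'[OF False sw])
    have e2: "cyl h \<tau> F (w @ [A]) = Qs (last w) (cyl h \<tau> F w) \<inter> A"
      using e Q_props(4)[OF lP sub IH A] by simp
    have "Qs (last w) (cyl h \<tau> F w) \<inter> A \<noteq> {}" using snoc.prems(2) e2 by simp
    then have "connected (Qs (last w) (cyl h \<tau> F w) \<inter> A) \<and> wg A (wa A) \<in> Qs (last w) (cyl h \<tau> F w) \<inter> A"
      using TOP[OF lP sub IH A] by blast
    then show ?thesis unfolding e2 by simp
  qed
qed

lemma cg_inst: "cg P (cyl h \<tau> F) (\<lambda>A C. plusZ \<tau> (F ` C) \<inter> A)"
proof (unfold_locales)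
  show "finite P" by (rule BP_fin)
  show "\<And>A. A \<in> P \<Longrightarrow> cyl h \<tau> F [A] = A" by (rule cyl_single')
  show "\<And>w A. w \<noteq> [] \<Longrightarrow> set w \<subseteq> P \<Longrightarrow> A \<in> P \<Longrightarrow>
      cyl h \<tau> F (w @ [A]) = plusZ \<tau> (F ` cyl h \<tau> F w) \<inter> A" by (rule cyl_snoc')
  show "\<And>A C. plusZ \<tau> (F ` C) \<inter> A \<subseteq> A" by blast
  show "\<And>C C' A. C \<subseteq> C' \<Longrightarrow> plusZ \<tau> (F ` C) \<inter> A \<subseteq> plusZ \<tau> (F ` C') \<inter> A"
  proof -
    fix C C' A :: "'a set" assume "C \<subseteq> C'"
    then have "plusZ \<tau> (F ` C) \<subseteq> plusZ \<tau> (F ` C')" by (intro plusZ_mono image_mono)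
    then show "plusZ \<tau> (F ` C) \<inter> A \<subseteq> plusZ \<tau> (F ` C') \<inter> A" by blast
  qed
  show "\<And>A. plusZ \<tau> (F ` {}) \<inter> A = {}" using plusZ_empty by simp
next
  fix s A1 A2
  assume s: "s \<in> words P" "cyl h \<tau> F s \<noteq> {}" and A: "A1 \<in> P" "A2 \<in> P"
    and p1: "plusZ \<tau> (F ` cyl h \<tau> F s) \<inter> A1 \<noteq> {}" "plusZ \<tau> (F ` cyl h \<tau> F s) \<inter> A1 \<noteq> A1"
    and p2: "plusZ \<tau> (F ` cyl h \<tau> F s) \<inter> A2 \<noteq> {}" "plusZ \<tau> (F ` cyl h \<tau> F s) \<inter> A2 \<noteq> A2"
  have ne: "s \<noteq> []" "set s \<subseteq> P" using s by (auto simp: words_def)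
  have lP: "last s \<in> P" using ne by (meson last_in_set subsetD)
  have sub: "cyl h \<tau> F s \<subseteq> last s" by (rule cyl_last'[OF ne])
  have I: "connected (cyl h \<tau> F s)" "wg (last s) (wa (last s)) \<in> cyl h \<tau> F s"
    using INV[OF s] by blast+
  have q1: "plusZ \<tau> (F ` cyl h \<tau> F s) \<inter> A1 = Qs (last s) (cyl h \<tau> F s) \<inter> A1"
    by (rule Q_props(4)[OF lP sub I A(1)])
  have q2: "plusZ \<tau> (F ` cyl h \<tau> F s) \<inter> A2 = Qs (last s) (cyl h \<tau> F s) \<inter> A2"
    by (rule Q_props(4)[OF lP sub I A(2)])
  show "A1 = A2"
    by (rule UNIQ[OF lP sub I A(1) p1[unfolded q1] A(2) p2[unfolded q2]])
qed

end


theorem mainTheorem6: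
  fixes h :: "real \<Rightarrow> 'a::topological_space"
    and \<tau> F :: "'a \<Rightarrow> 'a"
    and P :: "'a set set"
    and lb :: "'a set \<Rightarrow> 'a set" and p :: "'a set \<Rightarrow> int"
  assumes LG: "lifted_graph h \<tau>"
    and cont: "continuous_on UNIV F"
    and SL: "sun_like h F"
    and deg: "degree_one \<tau> F"
    and BP: "basic_partition h \<tau> F P lb p"
  defines "V \<equiv> cg_vertices h \<tau> F P"
    and "E \<equiv> cg_arrows h \<tau> F P"
    and "H \<equiv> height h \<tau> F"
    and "I \<equiv> {a. inf_path (cg_vertices h \<tau> F P) (cg_arrows h \<tau> F P) a \<and>
               height h \<tau> F (a 0) = 0 \<and> (\<forall>n\<ge>1. height h \<tau> F (a n) > 0)}"
  shows "(\<forall>C. conn_component V E C \<longrightarrow> (\<exists>\<alpha>\<in>C. H \<alpha> = 0)) \<and>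
         finite {C. conn_component V E C} \<and> card {C. conn_component V E C} \<le> card P \<and>
         (\<forall>a\<in>I. \<forall>n. H (a n) = n) \<and> finite I \<and> card I \<le> card P \<and>
         (\<forall>a. inf_path V E a \<longrightarrow>
            (\<exists>C. conn_component V E C \<and> (\<exists>N. \<forall>n\<ge>N. a n \<in> C)) \<or>
            (\<exists>b\<in>I. \<exists>N M. \<forall>n. a (N + n) = b (M + n)))"
proof -
  interpret S: sett h \<tau> F P lb p by (rule sett.intro[OF LG cont SL deg BP])
  interpret CG: cg P "cyl h \<tau> F" "\<lambda>A C. plusZ \<tau> (F ` C) \<inter> A" by (rule S.cg_inst)
  have weq_eq: "weq h \<tau> F = CG.weqL" by (intro ext) (simp only: weq_def CG.weqL_def)
  have cls_eq: "cls h \<tau> F P = CG.clsL" by (intro ext) (simp only: cls_def CG.clsL_def weq_eq)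
  have V_eq: "V = CG.VL" unfolding V_def cg_vertices_def CG.VL_def cls_eq ..
  have E_eq: "E = CG.EL" unfolding E_def cg_arrows_def CG.EL_def cls_eq V_eq[unfolded V_def] ..
  have H_eq: "H = CG.HL" unfolding H_def by (intro ext) (simp only: height_def CG.HL_def weq_eq)
  have I_eq: "I = CG.IL" unfolding I_def CG.IL_def V_eq[unfolded V_def] E_eq[unfolded E_def] H_eq[unfolded H_def] ..
  show ?thesis
    unfolding V_eq E_eq H_eq I_eq
  proof (intro conjI allI impI ballI)
    fix C assume "conn_component CG.VL CG.EL C"
    then show "\<exists>\<alpha>\<in>C. CG.HL \<alpha> = 0" by (rule CG.comp_zero)
  next
    show "finite {C. conn_component CG.VL CG.EL C}" using CG.comp_count by blast
    show "card {C. conn_component CG.VL CG.EL C} \<le> card P" using CG.comp_count by blast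
    show "finite CG.IL" using CG.IL_count by blast
    show "card CG.IL \<le> card P" using CG.IL_count by blast
  next
    fix a n assume "a \<in> CG.IL"
    then show "CG.HL (a n) = n" by (rule CG.IL_height)
  next
    fix a assume "inf_path CG.VL CG.EL a"
    then show "(\<exists>C. conn_component CG.VL CG.EL C \<and> (\<exists>N. \<forall>n\<ge>N. a n \<in> C)) \<or>
            (\<exists>b\<in>CG.IL. \<exists>N M. \<forall>n. a (N + n) = b (M + n))" by (rule CG.path_class)
  qed
qed

end
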